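(* Let $(\theta_k,\lambda_k)_{k=0}^{K}$ be random sequences with $\theta_0\in\mathbb{R}^d$ deterministic, $\lambda_k\in[0,2/\delta]$ for all $k$, and $$\theta_{k+1}=\theta_k+\alpha\,\omega_k,\qquad k=0,\dots,K-1,$$ where $\alpha>0$ and $\omega_k\in\mathbb{R}^d$ are random vectors. Let $\mathcal{F}_k$ be a filtration such that $\theta_k,\lambda_k$ are $\mathcal{F}_k$-measurable, write $\mathbb{E}_k[\cdot]=\mathbb{E}[\cdot\mid\mathcal{F}_k]$, and let $\omega_k^*:=F(\theta_k)^{-1}\nabla_\theta\mathcal{L}(\theta_k,\lambda_k)$. Suppose the Score-function, Fisher non-degeneracy and Transferred compatible approximation assumptions below hold, and that $\mathbb{E}_{s\sim d^{\pi^*}}[\mathrm{KL}(\pi^*(\cdot|s)\,\|\,\pi_{\theta_0}(\cdot|s))]<\infty$. Then $$\frac{1}{K}\mathbb{E}\sum_{k=0}^{K-1}\big(\mathcal{L}(\pi^*,\lambda_k)-\mathcal{L}(\theta_k,\lambda_k)\big)\le \sqrt{\epsilon_{\mathrm{bias}}}+\frac{G_1}{K}\sum_{k=0}^{K-1}\mathbb{E}\big\|\mathbb{E}_k[\omega_k]-\omega_k^*\big\|+\frac{\alpha G_2}{2K}\sum_{k=0}^{K-1}\mathbb{E}\|\omega_k\|^2+\frac{1}{\alpha K}\mathbb{E}_{s\sim d^{\pi^*}}\big[\mathrm{KL}(\pi^*(\cdot|s)\,\|\,\pi_{\theta_0}(\cdot|s))\big].$$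
   Context: CMDP setting: finite state space $\mathcal{S}$, finite action space $\mathcal{A}$, reward $r:\mathcal{S}\times\mathcal{A}\to[0,1]$, cost $c:\mathcal{S}\times\mathcal{A}\to[-1,1]$, transition kernel $P(\cdot|s,a)$. A (stationary randomized) policy is $\pi:\mathcal{S}\to\Delta(\mathcal{A})$; $\Pi$ is the set of all policies. Ergodicity: for every policy $\pi$ the state chain with kernel $P^\pi(s,s')=\sum_a\pi(a|s)P(s'|s,a)$ is irreducible and aperiodic, with unique stationary distribution $d^\pi$; set $\nu^\pi(s,a)=d^\pi(s)\pi(a|s)$. For $g\in\{r,c\}$: $J_g^\pi=\sum_{s,a}\nu^\pi(s,a)g(s,a)$, $Q_g^\pi(s,a)=\mathbb{E}_\pi[\sum_{t\ge0}(g(s_t,a_t)-J_g^\pi)\mid s_0=s,a_0=a]$, $V_g^\pi(s)=\mathbb{E}_{a\sim\pi(s)}Q_g^\pi(s,a)$, $A_g^\pi=Q_g^\pi-V_g^\pi$. Parametrized policies $\pi_\theta$, $\theta\in\mathbb{R}^d$, differentiable in $\theta$; $J_g(\theta):=J_g^{\pi_\theta}$. Lagrangian $\mathcal{L}(\theta,\lambda)=J_r(\theta)+\lambda J_c(\theta)$ and, for a policy $\pi$, $\mathcal{L}(\pi,\lambda)=J_r^\pi+\lambda J_c^\pi$. Fisher matrix $F(\theta)=\mathbb{E}_{(s,a)\sim\nu^{\pi_\theta}}[\nabla_\theta\log\pi_\theta(a|s)\nabla_\theta\log\pi_\theta(a|s)^\top]$. Slater: there exist $\delta\in(0,1)$ and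 $\bar\theta$ with $J_c(\bar\theta)\ge\delta$. $\pi^*$ is an optimal solution of $\max_{\pi\in\Pi}J_r^\pi$ s.t. $J_c^\pi\ge0$. Score-function assumption: for all $\theta,\theta_1,\theta_2$ and $(s,a)$, $\|\nabla_\theta\log\pi_\theta(a|s)\|\le G_1$ and $\|\nabla_\theta\log\pi_{\theta_1}(a|s)-\nabla_\theta\log\pi_{\theta_2}(a|s)\|\le G_2\|\theta_1-\theta_2\|$. Fisher non-degeneracy: $F(\theta)-\mu I_d$ is positive semidefinite for all $\theta$, for some $\mu>0$. Transferred compatible approximation: for all $\theta$ and $\lambda\in[0,2/\delta]$, with $\omega^*_{\theta,\lambda}=F(\theta)^{-1}\nabla_\theta\mathcal{L}(\theta,\lambda)$, $\mathbb{E}_{(s,a)\sim\nu^{\pi^*}}\big[(\nabla_\theta\log\pi_\theta(a|s)^\top\omega^*_{\theta,\lambda}-A_r^{\pi_\theta}(s,a)-\lambda A_c^{\pi_\theta}(s,a))^2\big]\le\epsilon_{\mathrm{bias}}$. *)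

theory Defs
  imports "HOL-Analysis.Analysis" "HOL-Probability.Probability"
begin

text \<open>States 's and actions 'a are finite types. A transition kernel is
  P s a s' = P(s'|s,a); a policy is pol s a = pol(a|s).\<close>

definition is_dist :: "('b::finite \<Rightarrow> real) \<Rightarrow> bool" where
  "is_dist p \<longleftrightarrow> (\<forall>x. 0 \<le> p x) \<and> (\<Sum>x\<in>UNIV. p x) = 1"

definition is_policy :: "('s::finite \<Rightarrow> 'a::finite \<Rightarrow> real) \<Rightarrow> bool" where
  "is_policy pol \<longleftrightarrow> (\<forall>s. is_dist (pol s))"

definition is_kernel :: "('s::finite \<Rightarrow> 'a::finite \<Rightarrow> 's \<Rightarrow> real) \<Rightarrow> bool" where
  "is_kernel P \<longleftrightarrow> (\<forall>s a. is_dist (P s a))"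

definition Ppi :: "('s::finite \<Rightarrow> 'a::finite \<Rightarrow> 's \<Rightarrow> real) \<Rightarrow> ('s \<Rightarrow> 'a \<Rightarrow> real) \<Rightarrow> 's \<Rightarrow> 's \<Rightarrow> real" where
  "Ppi P pol s s' = (\<Sum>a\<in>UNIV. pol s a * P s a s')"

fun mstep :: "('s::finite \<Rightarrow> 's \<Rightarrow> real) \<Rightarrow> nat \<Rightarrow> 's \<Rightarrow> 's \<Rightarrow> real" where
  "mstep Q 0 s s' = (if s = s' then 1 else 0)"
| "mstep Q (Suc n) s s' = (\<Sum>u\<in>UNIV. mstep Q n s u * Q u s')"

definition irreducible_chain :: "('s::finite \<Rightarrow> 's \<Rightarrow> real) \<Rightarrow> bool" where
  "irreducible_chain Q \<longleftrightarrow> (\<forall>s s'. \<exists>n. 0 < mstep Q n s s')"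

definition period :: "('s::finite \<Rightarrow> 's \<Rightarrow> real) \<Rightarrow> 's \<Rightarrow> nat" where
  "period Q s = Gcd {n. 0 < n \<and> 0 < mstep Q n s s}"

definition aperiodic_chain :: "('s::finite \<Rightarrow> 's \<Rightarrow> real) \<Rightarrow> bool" where
  "aperiodic_chain Q \<longleftrightarrow> (\<forall>s. period Q s = 1)"

definition ergodic :: "('s::finite \<Rightarrow> 'a::finite \<Rightarrow> 's \<Rightarrow> real) \<Rightarrow> bool" where
  "ergodic P \<longleftrightarrow> (\<forall>pol. is_policy pol \<longrightarrow>
      irreducible_chain (Ppi P pol) \<and> aperiodic_chain (Ppi P pol))"

definition stationary :: "('s::finite \<Rightarrow> 's \<Rightarrow> real) \<Rightarrow> ('s \<Rightarrow> real) \<Rightarrow> bool" where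
  "stationary Q d \<longleftrightarrow> is_dist d \<and> (\<forall>s'. (\<Sum>s\<in>UNIV. d s * Q s s') = d s')"

text \<open>d^pol : the (unique, under ergodicity) stationary distribution.\<close>
definition statdist :: "('s::finite \<Rightarrow> 'a::finite \<Rightarrow> 's \<Rightarrow> real) \<Rightarrow> ('s \<Rightarrow> 'a \<Rightarrow> real) \<Rightarrow> 's \<Rightarrow> real" where
  "statdist P pol = (THE d. stationary (Ppi P pol) d)"

definition occ :: "('s::finite \<Rightarrow> 'a::finite \<Rightarrow> 's \<Rightarrow> real) \<Rightarrow> ('s \<Rightarrow> 'a \<Rightarrow> real) \<Rightarrow> 's \<Rightarrow> 'a \<Rightarrow> real" where
  "occ P pol s a = statdist P pol s * pol s a"

definition Jv :: "('s::finite \<Rightarrow> 'a::finite \<Rightarrow> 's \<Rightarrow> real) \<Rightarrow> ('s \<Rightarrow> 'a \<Rightarrow> real) \<Rightarrow> ('s \<Rightarrow> 'a \<Rightarrow> real) \<Rightarrow> real" where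
  "Jv P pol g = (\<Sum>s\<in>UNIV. \<Sum>a\<in>UNIV. occ P pol s a * g s a)"

text \<open>Law of (s_t,a_t) under pol started from s_0 = s, a_0 = a.\<close>
fun sadist :: "('s::finite \<Rightarrow> 'a::finite \<Rightarrow> 's \<Rightarrow> real) \<Rightarrow> ('s \<Rightarrow> 'a \<Rightarrow> real) \<Rightarrow> 's \<Rightarrow> 'a \<Rightarrow> nat \<Rightarrow> 's \<Rightarrow> 'a \<Rightarrow> real" where
  "sadist P pol s a 0 s' a' = (if s' = s \<and> a' = a then 1 else 0)"
| "sadist P pol s a (Suc t) s' a' =
     (\<Sum>u\<in>UNIV. \<Sum>b\<in>UNIV. sadist P pol s a t u b * P u b s') * pol s' a'"

definition Qf :: "('s::finite \<Rightarrow> 'a::finite \<Rightarrow> 's \<Rightarrow> real) \<Rightarrow> ('s \<Rightarrow> 'a \<Rightarrow> real) \<Rightarrow> ('s \<Rightarrow> 'a \<Rightarrow> real) \<Rightarrow> 's \<Rightarrow> 'a \<Rightarrow> real" where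
  "Qf P pol g s a = (\<Sum>t. (\<Sum>s'\<in>UNIV. \<Sum>a'\<in>UNIV. sadist P pol s a t s' a' * g s' a') - Jv P pol g)"

definition Vf :: "('s::finite \<Rightarrow> 'a::finite \<Rightarrow> 's \<Rightarrow> real) \<Rightarrow> ('s \<Rightarrow> 'a \<Rightarrow> real) \<Rightarrow> ('s \<Rightarrow> 'a \<Rightarrow> real) \<Rightarrow> 's \<Rightarrow> real" where
  "Vf P pol g s = (\<Sum>a\<in>UNIV. pol s a * Qf P pol g s a)"

definition Adv :: "('s::finite \<Rightarrow> 'a::finite \<Rightarrow> 's \<Rightarrow> real) \<Rightarrow> ('s \<Rightarrow> 'a \<Rightarrow> real) \<Rightarrow> ('s \<Rightarrow> 'a \<Rightarrow> real) \<Rightarrow> 's \<Rightarrow> 'a \<Rightarrow> real" where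
  "Adv P pol g s a = Qf P pol g s a - Vf P pol g s"

definition Lagr :: "('s::finite \<Rightarrow> 'a::finite \<Rightarrow> 's \<Rightarrow> real) \<Rightarrow> ('s \<Rightarrow> 'a \<Rightarrow> real) \<Rightarrow> ('s \<Rightarrow> 'a \<Rightarrow> real) \<Rightarrow> ('s \<Rightarrow> 'a \<Rightarrow> real) \<Rightarrow> real \<Rightarrow> real" where
  "Lagr P r c pol lam = Jv P pol r + lam * Jv P pol c"

definition grad :: "(real^'d \<Rightarrow> real) \<Rightarrow> real^'d \<Rightarrow> real^'d" where
  "grad f x = (\<chi> i. frechet_derivative f (at x) (axis i 1))"

definition score :: "(real^'d \<Rightarrow> 's \<Rightarrow> 'a \<Rightarrow> real) \<Rightarrow> real^'d \<Rightarrow> 's \<Rightarrow> 'a \<Rightarrow> real^'d" where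
  "score pol th s a = grad (\<lambda>t. ln (pol t s a)) th"

definition fisher :: "('s::finite \<Rightarrow> 'a::finite \<Rightarrow> 's \<Rightarrow> real) \<Rightarrow> (real^'d \<Rightarrow> 's \<Rightarrow> 'a \<Rightarrow> real) \<Rightarrow> real^'d \<Rightarrow> real^'d^'d" where
  "fisher P pol th = (\<chi> i j. \<Sum>s\<in>UNIV. \<Sum>a\<in>UNIV.
       occ P (pol th) s a * (score pol th s a $ i) * (score pol th s a $ j))"

definition mat_inverse :: "real^'n^'n \<Rightarrow> real^'n^'n" where
  "mat_inverse A = (SOME B. A ** B = mat 1 \<and> B ** A = mat 1)"

definition natgrad :: "('s::finite \<Rightarrow> 'a::finite \<Rightarrow> 's \<Rightarrow> real) \<Rightarrow> ('s \<Rightarrow> 'a \<Rightarrow> real) \<Rightarrow> ('s \<Rightarrow> 'a \<Rightarrow> real)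
     \<Rightarrow> (real^'d \<Rightarrow> 's \<Rightarrow> 'a \<Rightarrow> real) \<Rightarrow> real^'d \<Rightarrow> real \<Rightarrow> real^'d" where
  "natgrad P r c pol th lam =
     mat_inverse (fisher P pol th) *v grad (\<lambda>t. Lagr P r c (pol t) lam) th"

definition KL :: "('a::finite \<Rightarrow> real) \<Rightarrow> ('a \<Rightarrow> real) \<Rightarrow> real" where
  "KL p q = (\<Sum>a\<in>UNIV. if p a = 0 then 0 else p a * ln (p a / q a))"

definition KL_term :: "('s::finite \<Rightarrow> 'a::finite \<Rightarrow> 's \<Rightarrow> real) \<Rightarrow> ('s \<Rightarrow> 'a \<Rightarrow> real) \<Rightarrow> ('s \<Rightarrow> 'a \<Rightarrow> real) \<Rightarrow> real" where
  "KL_term P pistar pi0 = (\<Sum>s\<in>UNIV. statdist P pistar s * KL (pistar s) (pi0 s))"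

end

theory Submission
  imports Defs
begin

definition stoch :: "('s::finite \<Rightarrow> 's \<Rightarrow> real) \<Rightarrow> bool" where
  "stoch Q \<longleftrightarrow> (\<forall>s s'. 0 \<le> Q s s') \<and> (\<forall>s. (\<Sum>s'\<in>UNIV. Q s s') = 1)"

lemma mstep_nonneg: "stoch Q \<Longrightarrow> 0 \<le> mstep Q n s s'"
  by (induction n arbitrary: s') (auto simp: stoch_def intro!: sum_nonneg)

lemma swap_mult: "(\<Sum>i\<in>UNIV. \<Sum>j\<in>UNIV. (a j::real) * b j i) = (\<Sum>j\<in>(UNIV::'b::finite set). a j * (\<Sum>i\<in>(UNIV::'c::finite set). b j i))"
  by (subst sum.swap) (simp add: sum_distrib_left)

lemma mstep_rowsum: assumes "stoch Q" shows "(\<Sum>s'\<in>UNIV. mstep Q n s s') = 1"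
proof (induction n)
  case 0 show ?case by simp
next
  case (Suc n)
  have "(\<Sum>s'\<in>UNIV. mstep Q (Suc n) s s') = (\<Sum>u\<in>UNIV. mstep Q n s u * (\<Sum>s'\<in>UNIV. Q u s'))"
    by (simp add: swap_mult)
  also have "\<dots> = 1" using Suc assms by (simp add: stoch_def)
  finally show ?case .
qed

lemma mstep_add: "mstep Q (m + n) s s' = (\<Sum>u\<in>UNIV. mstep Q m s u * mstep Q n u s')"
proof (induction n arbitrary: s')
  case 0 then show ?case by (simp add: if_distrib cong: if_cong)
next
  case (Suc n)
  have "mstep Q (m + Suc n) s s' = (\<Sum>v\<in>UNIV. mstep Q (m+n) s v * Q v s')" by simp
  also have "\<dots> = (\<Sum>v\<in>UNIV. \<Sum>u\<in>UNIV. mstep Q m s u * (mstep Q n u v * Q v s'))"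
    using Suc by (simp add: sum_distrib_right mult.assoc)
  also have "\<dots> = (\<Sum>u\<in>UNIV. mstep Q m s u * (\<Sum>v\<in>UNIV. mstep Q n u v * Q v s'))"
    by (rule swap_mult)
  finally show ?case by simp
qed

lemma delta_sum: fixes f :: "'b::finite \<Rightarrow> real" shows "(\<Sum>u\<in>UNIV. (if s = u then 1 else 0) * (f u::real)) = f s"
proof -
  have "(\<Sum>u\<in>UNIV. (if s = u then 1 else 0) * (f u::real)) = (\<Sum>u\<in>UNIV. if s = u then f u else 0)"
    by (rule sum.cong) auto
  also have "\<dots> = f s" by (simp add: sum.delta')
  finally show ?thesis .
qed

lemma mstep_1: "mstep Q (Suc 0) s s' = Q s s'"
  by (simp add: delta_sum)

lemma mstep_split_le: assumes "stoch Q"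
  shows "mstep Q m s u * mstep Q n u s' \<le> mstep Q (m + n) s s'"
  unfolding mstep_add
  by (rule member_le_sum[of u UNIV "\<lambda>u. mstep Q m s u * mstep Q n u s'"])
     (auto intro!: mult_nonneg_nonneg mstep_nonneg assms)

definition pw :: "('s::finite \<Rightarrow> 's \<Rightarrow> real) \<Rightarrow> ('s \<Rightarrow> real) \<Rightarrow> nat \<Rightarrow> 's \<Rightarrow> real" where
  "pw Q x n s' = (\<Sum>s\<in>UNIV. x s * mstep Q n s s')"

lemma pw_0: "pw Q x 0 = x"
  by (rule ext) (simp add: pw_def if_distrib cong: if_cong)

lemma pw_add: "pw Q x (m + n) = pw Q (pw Q x m) n"
proof (rule ext)
  fix s'
  have "pw Q x (m + n) s' = (\<Sum>s\<in>UNIV. \<Sum>u\<in>UNIV. x s * mstep Q m s u * mstep Q n u s')"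
    by (simp add: pw_def mstep_add sum_distrib_left mult.assoc)
  also have "\<dots> = (\<Sum>u\<in>UNIV. \<Sum>s\<in>UNIV. x s * mstep Q m s u * mstep Q n u s')"
    by (rule sum.swap)
  also have "\<dots> = pw Q (pw Q x m) n s'"
    by (simp add: pw_def sum_distrib_right)
  finally show "pw Q x (m + n) s' = pw Q (pw Q x m) n s'" .
qed

lemma pw_Suc: "pw Q x (Suc n) s' = (\<Sum>u\<in>UNIV. pw Q x n u * Q u s')"
  using pw_add[of Q x n 1] by (simp add: pw_def mstep_1 delta_sum sum_distrib_right)

lemma pw_sum: assumes "stoch Q" shows "(\<Sum>s\<in>UNIV. pw Q x n s) = (\<Sum>s\<in>UNIV. x s)"
  unfolding pw_def by (simp add: swap_mult mstep_rowsum[OF assms])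

lemma pw_diff: "pw Q (\<lambda>s. x s - y s) n s' = pw Q x n s' - pw Q y n s'"
  by (simp add: pw_def left_diff_distrib sum_subtractf)

lemma pw_L1: assumes "stoch Q" shows "(\<Sum>s\<in>UNIV. \<bar>pw Q x n s\<bar>) \<le> (\<Sum>s\<in>UNIV. \<bar>x s\<bar>)"
proof -
  have "(\<Sum>s'\<in>UNIV. \<bar>pw Q x n s'\<bar>) \<le> (\<Sum>s'\<in>UNIV. \<Sum>s\<in>UNIV. \<bar>x s\<bar> * mstep Q n s s')"
    unfolding pw_def
    by (rule sum_mono, rule order_trans[OF sum_abs]) (simp add: abs_mult mstep_nonneg[OF assms])
  also have "\<dots> = (\<Sum>s\<in>UNIV. \<bar>x s\<bar>)"
    by (simp add: swap_mult mstep_rowsum[OF assms])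
  finally show ?thesis .
qed

lemma pw_contract:
  fixes Q :: "'s::finite \<Rightarrow> 's \<Rightarrow> real"
  assumes Q: "stoch Q" and b: "\<forall>s s'. \<beta> \<le> mstep Q N s s'" and x0: "(\<Sum>s\<in>UNIV. x s) = 0"
  shows "(\<Sum>s'\<in>UNIV. \<bar>pw Q x N s'\<bar>) \<le> (1 - real CARD('s) * \<beta>) * (\<Sum>s\<in>UNIV. \<bar>x s\<bar>)"
proof -
  have eq: "pw Q x N s' = (\<Sum>s\<in>UNIV. x s * (mstep Q N s s' - \<beta>))" for s'
  proof -
    have "(\<Sum>s\<in>UNIV. x s * (mstep Q N s s' - \<beta>)) = pw Q x N s' - (\<Sum>s\<in>UNIV. x s) * \<beta>"
      by (simp add: pw_def right_diff_distrib sum_subtractf sum_distrib_right)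
    then show ?thesis using x0 by simp
  qed
  have "(\<Sum>s'\<in>UNIV. \<bar>pw Q x N s'\<bar>) \<le> (\<Sum>s'\<in>UNIV. \<Sum>s\<in>UNIV. \<bar>x s\<bar> * (mstep Q N s s' - \<beta>))"
    unfolding eq
    by (rule sum_mono, rule order_trans[OF sum_abs]) (simp add: abs_mult b)
  also have "\<dots> = (\<Sum>s\<in>UNIV. \<bar>x s\<bar> * (\<Sum>s'\<in>UNIV. (mstep Q N s s' - \<beta>)))"
    by (rule swap_mult)
  also have "\<dots> = (\<Sum>s\<in>UNIV. (1 - real CARD('s) * \<beta>) * \<bar>x s\<bar>)"
    by (simp add: sum_subtractf mstep_rowsum[OF Q] mult.commute[of "\<bar>_\<bar>"])
  also have "\<dots> = (1 - real CARD('s) * \<beta>) * (\<Sum>s\<in>UNIV. \<bar>x s\<bar>)"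
    by (rule sum_distrib_left[symmetric])
  finally show ?thesis .
qed

lemma semigroup_large:
  fixes S :: "nat set"
  assumes pos: "\<forall>n\<in>S. 0 < n" and add: "\<forall>m\<in>S. \<forall>n\<in>S. m + n \<in> S" and g: "Gcd S = 1"
  shows "\<exists>N. \<forall>n\<ge>N. n \<in> S"
proof -
  define S0 where "S0 = insert 0 S"
  have add0: "m \<in> S0 \<Longrightarrow> n \<in> S0 \<Longrightarrow> m + n \<in> S0" for m n
    using add by (auto simp: S0_def)
  have mult0: "k * m \<in> S0" if m: "m \<in> S0" for k m
  proof (induction k)
    case 0 show ?case by (simp add: S0_def)
  next
    case (Suc k) then show ?case using add0[OF m Suc] by simp
  qed
  have posS: "n \<in> S0 \<Longrightarrow> 0 < n \<Longrightarrow> n \<in> S" for n by (auto simp: S0_def)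
  have "S \<noteq> {}" using g by auto
  then obtain s1 where s1: "s1 \<in> S" by auto
  define D where "D = {g. 0 < g \<and> (\<exists>u\<in>S0. \<exists>v\<in>S0. u = v + g)}"
  have "s1 \<in> D" using s1 pos by (auto simp: D_def S0_def)
  define g0 where "g0 = (LEAST g. g \<in> D)"
  have g0D: "g0 \<in> D" unfolding g0_def by (rule LeastI) (rule \<open>s1 \<in> D\<close>)
  have g0min: "h \<in> D \<Longrightarrow> g0 \<le> h" for h unfolding g0_def by (rule Least_le)
  obtain u0 v0 where uv0: "u0 \<in> S0" "v0 \<in> S0" "u0 = v0 + g0" "0 < g0" using g0D by (auto simp: D_def)
  have dv: "g0 dvd s" if s: "s \<in> S" for s
  proof (rule ccontr)
    assume nd: "\<not> g0 dvd s"
    define q where "q = s div g0"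
    define rr where "rr = s mod g0"
    have rr0: "0 < rr" using nd by (simp add: rr_def mod_eq_0_iff_dvd[symmetric])
    have rrl: "rr < g0" using uv0 by (simp add: rr_def)
    have sq: "s = q * g0 + rr" by (simp add: q_def rr_def)
    have e1: "s + q * v0 = q * u0 + rr"
      unfolding sq uv0(3) by (simp add: algebra_simps)
    moreover have "s + q * v0 \<in> S0"
    proof -
      have "s \<in> S0" using s by (simp add: S0_def)
      then show ?thesis using add0[OF _ mult0[OF uv0(2)]] by blast
    qed
    moreover have "q * u0 \<in> S0" by (rule mult0[OF uv0(1)])
    ultimately have "\<exists>u\<in>S0. \<exists>v\<in>S0. u = v + rr" by blast
    then have "rr \<in> D" using rr0 unfolding D_def by blast
    then show False using g0min[of rr] rrl by simp
  qed
  have "g0 dvd Gcd S" by (rule Gcd_greatest) (use dv in auto)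
  then have g01: "g0 = 1" using g by simp
  show ?thesis
  proof (cases "v0 = 0")
    case True
    then have "1 \<in> S0" using uv0 g01 by simp
    then have "\<forall>n\<ge>1. n \<in> S"
    proof (intro allI impI)
      fix n :: nat assume "1 \<le> n"
      have "n * 1 \<in> S0" by (rule mult0) fact
      then show "n \<in> S" using posS \<open>1 \<le> n\<close> by simp
    qed
    then show ?thesis by blast
  next
    case False
    have "\<forall>n\<ge>v0 * v0. n \<in> S"
    proof (intro allI impI)
      fix n assume n: "v0 * v0 \<le> n"
      define a where "a = n div v0"
      define b where "b = n mod v0"
      have bl: "b < v0" using False by (simp add: b_def)
      have al: "v0 \<le> a" using n False by (simp add: a_def less_eq_div_iff_mult_less_eq)
      have "n = (a - b) * v0 + b * u0"
      proof -
        have "(a - b) * v0 + b * u0 = (a - b) * v0 + b * v0 + b" using uv0 g01 by (simp add: algebra_simps)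
        also have "\<dots> = a * v0 + b" using al bl by (simp add: algebra_simps)
        also have "\<dots> = n" by (simp add: a_def b_def)
        finally show ?thesis by simp
      qed
      moreover have "(a - b) * v0 + b * u0 \<in> S0" using uv0 by (auto intro!: add0 mult0)
      moreover have "0 < n"
      proof -
        have "0 < v0 * v0" using False by simp
        then show ?thesis using n by linarith
      qed
      ultimately show "n \<in> S" using posS by metis
    qed
    then show ?thesis by blast
  qed
qed

lemma aperiodic_large:
  assumes Q: "stoch Q" and ap: "aperiodic_chain Q"
  shows "\<exists>N. \<forall>n\<ge>N. 0 < mstep Q n s s"
proof -
  let ?S = "{n. 0 < n \<and> 0 < mstep Q n s s}"
  have "\<forall>m\<in>?S. \<forall>n\<in>?S. m + n \<in> ?S"
  proof (intro ballI)
    fix m n assume "m \<in> ?S" "n \<in> ?S"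
    then have "0 < mstep Q m s s * mstep Q n s s" by auto
    also have "\<dots> \<le> mstep Q (m + n) s s" by (rule mstep_split_le[OF Q])
    finally show "m + n \<in> ?S" using \<open>m \<in> ?S\<close> by auto
  qed
  moreover have "Gcd ?S = 1" using ap by (simp add: aperiodic_chain_def period_def)
  ultimately obtain N where "\<forall>n\<ge>N. n \<in> ?S" using semigroup_large[of ?S] by auto
  then show ?thesis by auto
qed

lemma primitive:
  fixes Q :: "'s::finite \<Rightarrow> 's \<Rightarrow> real"
  assumes Q: "stoch Q" and irr: "irreducible_chain Q" and ap: "aperiodic_chain Q"
  shows "\<exists>N>0. \<forall>s s'. 0 < mstep Q N s s'"
proof -
  define s0 :: 's where "s0 = undefined"
  obtain N0 where N0: "\<forall>n\<ge>N0. 0 < mstep Q n s0 s0" using aperiodic_large[OF Q ap] by blast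
  define a where "a s = (SOME n. 0 < mstep Q n s s0)" for s
  define b where "b s = (SOME n. 0 < mstep Q n s0 s)" for s
  have a: "0 < mstep Q (a s) s s0" for s
    unfolding a_def by (rule someI_ex) (use irr in \<open>auto simp: irreducible_chain_def\<close>)
  have b: "0 < mstep Q (b s) s0 s" for s
    unfolding b_def by (rule someI_ex) (use irr in \<open>auto simp: irreducible_chain_def\<close>)
  define A where "A = Max (range a)"
  define B where "B = Max (range b)"
  have aA: "a s \<le> A" for s unfolding A_def by (rule Max_ge) auto
  have bB: "b s \<le> B" for s unfolding B_def by (rule Max_ge) auto
  define N where "N = Suc N0 + A + B"
  have "0 < mstep Q N s s'" for s s'
  proof -
    define mid where "mid = N - a s - b s'"
    have mid: "N0 \<le> mid" "N = a s + (mid + b s')" using aA[of s] bB[of s'] by (auto simp: mid_def N_def)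
    have "0 < mstep Q (a s) s s0 * (mstep Q mid s0 s0 * mstep Q (b s') s0 s')"
    proof -
      have m1: "0 < mstep Q mid s0 s0" using N0 mid(1) by blast
      show ?thesis by (intro mult_pos_pos a b m1)
    qed
    also have "\<dots> \<le> mstep Q (a s) s s0 * mstep Q (mid + b s') s0 s'"
      by (rule mult_left_mono[OF mstep_split_le[OF Q] mstep_nonneg[OF Q]])
    also have "\<dots> \<le> mstep Q N s s'" unfolding mid(2) by (rule mstep_split_le[OF Q])
    finally show ?thesis .
  qed
  moreover have "0 < N" by (simp add: N_def)
  ultimately show ?thesis by blast
qed

lemma pw_stat: assumes "stationary Q d" shows "pw Q d n = d"
proof (induction n)
  case 0 show ?case by (rule pw_0)
next
  case (Suc n) show ?case
    by (rule ext) (use assms in \<open>simp add: pw_Suc Suc stationary_def\<close>)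
qed

lemma geom_bound:
  fixes Q :: "'s::finite \<Rightarrow> 's \<Rightarrow> real"
  assumes Q: "stoch Q" and irr: "irreducible_chain Q" and ap: "aperiodic_chain Q"
  shows "\<exists>\<gamma>. summable \<gamma> \<and> (\<forall>n. 0 \<le> \<gamma> n) \<and> (\<forall>x n. (\<Sum>s\<in>UNIV. x s) = 0 \<longrightarrow>
            (\<Sum>s'\<in>UNIV. \<bar>pw Q x n s'\<bar>) \<le> \<gamma> n * (\<Sum>s\<in>UNIV. \<bar>x s\<bar>))"
proof -
  obtain N where N: "0 < N" "\<forall>s s'. 0 < mstep Q N s s'" using primitive[OF Q irr ap] by blast
  define \<beta>0 where "\<beta>0 = Min (range (\<lambda>p. mstep Q N (fst p) (snd p)))"
  have b0pos: "0 < \<beta>0" unfolding \<beta>0_def using N(2) by (subst Min_gr_iff) auto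
  have b0le: "\<beta>0 \<le> mstep Q N s s'" for s s'
    unfolding \<beta>0_def by (rule Min_le) (auto intro: image_eqI[where x="(s,s')"])
  define s0 :: 's where "s0 = undefined"
  have cb: "real CARD('s) * \<beta>0 \<le> 1"
  proof -
    have "real CARD('s) * \<beta>0 = (\<Sum>s'\<in>(UNIV::'s set). \<beta>0)" by simp
    also have "\<dots> \<le> (\<Sum>s'\<in>UNIV. mstep Q N s0 s')" by (rule sum_mono) (rule b0le)
    also have "\<dots> = 1" by (rule mstep_rowsum[OF Q])
    finally show ?thesis .
  qed
  define \<beta> where "\<beta> = \<beta>0 / 2"
  define \<rho> where "\<rho> = 1 - real CARD('s) * \<beta>"
  have cpos: "0 < real CARD('s)" by simp
  have rho1: "\<rho> < 1" unfolding \<rho>_def \<beta>_def using b0pos cpos by simp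
  have rho0: "1/2 \<le> \<rho>" unfolding \<rho>_def \<beta>_def using cb by simp
  have bl: "\<forall>s s'. \<beta> \<le> mstep Q N s s'"
  proof (intro allI)
    fix s s' show "\<beta> \<le> mstep Q N s s'" using b0le[of s s'] b0pos unfolding \<beta>_def by linarith
  qed
  have bnd: "(\<Sum>s'\<in>UNIV. \<bar>pw Q x n s'\<bar>) \<le> \<rho> ^ (n div N) * (\<Sum>s\<in>UNIV. \<bar>x s\<bar>)"
    if "(\<Sum>s\<in>UNIV. x s) = 0" for n x
    using that
  proof (induction n arbitrary: x rule: less_induct)
    case (less n)
    show ?case
    proof (cases "n < N")
      case True
      then show ?thesis using pw_L1[OF Q, of x n] by simp
    next
      case False
      define y where "y = pw Q x (n - N)"
      have n: "n = (n - N) + N" using False by simp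
      have pwn: "pw Q x n = pw Q y N" unfolding y_def by (subst n) (rule pw_add)
      have y0: "(\<Sum>s\<in>UNIV. y s) = 0" unfolding y_def using pw_sum[OF Q] less.prems by simp
      have "(\<Sum>s'\<in>UNIV. \<bar>pw Q x n s'\<bar>) \<le> \<rho> * (\<Sum>s\<in>UNIV. \<bar>y s\<bar>)"
        unfolding pwn \<rho>_def by (rule pw_contract[OF Q bl y0])
      also have "\<dots> \<le> \<rho> * (\<rho> ^ ((n - N) div N) * (\<Sum>s\<in>UNIV. \<bar>x s\<bar>))"
        unfolding y_def
        by (rule mult_left_mono[OF less.IH]) (use N(1) False less.prems rho0 in auto)
      also have "\<dots> = \<rho> ^ (n div N) * (\<Sum>s\<in>UNIV. \<bar>x s\<bar>)"
        using le_div_geq[OF N(1)] False by simp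
      finally show ?thesis .
    qed
  qed
  define r where "r = root N \<rho>"
  have r0: "0 < r" unfolding r_def using rho0 N(1) by simp
  have r1: "r < 1" unfolding r_def using rho1 rho0 N(1) by simp
  have rN: "r ^ N = \<rho>" unfolding r_def using rho0 N(1) by (simp add: real_root_pow_pos2)
  have gle: "\<rho> ^ (n div N) \<le> (1/\<rho>) * r ^ n" for n
  proof -
    have "r ^ n = r ^ (N * (n div N) + n mod N)" by simp
    also have "\<dots> = \<rho> ^ (n div N) * r ^ (n mod N)" by (simp only: power_add power_mult rN)
    finally have e: "r ^ n = \<rho> ^ (n div N) * r ^ (n mod N)" .
    have "r ^ N \<le> r ^ (n mod N)"
      by (rule power_decreasing) (use r0 r1 N(1) in auto)
    then have "\<rho> ^ (n div N) * \<rho> \<le> r ^ n"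
      unfolding e rN using rho0 by (intro mult_left_mono) auto
    then show ?thesis using rho0 by (simp add: field_simps)
  qed
  have "summable (\<lambda>n. (1/\<rho>) * r ^ n)"
    by (rule summable_mult) (rule summable_geometric, use r0 r1 in simp)
  then have "summable (\<lambda>n. \<rho> ^ (n div N))"
    by (rule summable_comparison_test'[where N=0]) (use gle rho0 in simp)
  moreover have "\<forall>n. 0 \<le> \<rho> ^ (n div N)" using rho0 by simp
  ultimately show ?thesis using bnd by blast
qed

lemma chain_main:
  fixes Q :: "'s::finite \<Rightarrow> 's \<Rightarrow> real"
  assumes Q: "stoch Q" and irr: "irreducible_chain Q" and ap: "aperiodic_chain Q"
  shows "\<exists>\<gamma>. summable \<gamma> \<and> (\<forall>n. 0 \<le> \<gamma> n) \<and> (\<forall>x n. (\<Sum>s\<in>UNIV. x s) = 0 \<longrightarrow>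
            (\<Sum>s'\<in>UNIV. \<bar>pw Q x n s'\<bar>) \<le> \<gamma> n * (\<Sum>s\<in>UNIV. \<bar>x s\<bar>))"
    and "stationary Q (THE d. stationary Q d)"
    and "(\<lambda>n. mstep Q n s0 s') \<longlonglongrightarrow> (THE d. stationary Q d) s'"
proof -
  obtain \<gamma> where g: "summable \<gamma>" "\<forall>n. 0 \<le> \<gamma> n" "\<forall>x n. (\<Sum>s\<in>UNIV. x s) = 0 \<longrightarrow>
            (\<Sum>s'\<in>UNIV. \<bar>pw Q x n s'\<bar>) \<le> \<gamma> n * (\<Sum>s\<in>UNIV. \<bar>x s\<bar>)"
    using geom_bound[OF Q irr ap] by blast
  then show "\<exists>\<gamma>. summable \<gamma> \<and> (\<forall>n. 0 \<le> \<gamma> n) \<and> (\<forall>x n. (\<Sum>s\<in>UNIV. x s) = 0 \<longrightarrow>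
            (\<Sum>s'\<in>UNIV. \<bar>pw Q x n s'\<bar>) \<le> \<gamma> n * (\<Sum>s\<in>UNIV. \<bar>x s\<bar>))" by blast
  have g0: "\<gamma> \<longlonglongrightarrow> 0" by (rule summable_LIMSEQ_zero[OF g(1)])
  have uniq: "d1 = d2" if d1: "stationary Q d1" and d2: "stationary Q d2" for d1 d2
  proof -
    define z where "z s = d1 s - d2 s" for s
    have z0: "(\<Sum>s\<in>UNIV. z s) = 0" using d1 d2 by (simp add: z_def stationary_def is_dist_def sum_subtractf)
    have pz: "pw Q z n = z" for n
      by (rule ext) (simp add: z_def[abs_def] pw_diff pw_stat[OF d1] pw_stat[OF d2])
    define L where "L = (\<Sum>s\<in>UNIV. \<bar>z s\<bar>)"
    have L0: "0 \<le> L" unfolding L_def by (simp add: sum_nonneg)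
    have Lle: "L \<le> \<gamma> n * L" for n using g(3) z0 pz unfolding L_def by metis
    have "L = 0"
    proof (rule ccontr)
      assume "L \<noteq> 0"
      then have "0 < L" using L0 by simp
      have "eventually (\<lambda>n. \<gamma> n < 1) sequentially" using g0 by (rule order_tendstoD) simp
      then obtain n where "\<gamma> n < 1" by (meson eventually_sequentially order_refl)
      then have "\<gamma> n * L < L" using \<open>0 < L\<close> by simp
      then show False using Lle[of n] by simp
    qed
    then have "\<forall>s. z s = 0" unfolding L_def using sum_nonneg_eq_0_iff[of UNIV "\<lambda>s. \<bar>z s\<bar>"] by simp
    then show ?thesis by (auto simp: z_def fun_eq_iff)
  qed
  define e where "e s = (if s0 = s then 1 else (0::real))" for s
  define w where "w s = Q s0 s - e s" for s
  have w0: "(\<Sum>s\<in>UNIV. w s) = 0" using Q by (simp add: w_def e_def sum_subtractf stoch_def)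
  have ms: "mstep Q n s0 s = pw Q e n s" for n s
    by (simp add: pw_def e_def delta_sum)
  have mSuc: "mstep Q (Suc n) s0 s = pw Q (Q s0) n s" for n s
    using mstep_add[of Q 1 n s0 s] by (simp add: pw_def delta_sum)
  have conv: "convergent (\<lambda>n. mstep Q n s0 s)" for s
  proof -
    let ?f = "\<lambda>n. mstep Q (Suc n) s0 s - mstep Q n s0 s"
    have fw: "?f n = pw Q w n s" for n
    proof -
      have "?f n = pw Q (Q s0) n s - pw Q e n s" unfolding mSuc by (simp only: ms)
      also have "\<dots> = pw Q w n s" by (simp add: w_def[abs_def] pw_diff)
      finally show ?thesis .
    qed
    have "\<bar>pw Q w n s\<bar> \<le> (\<Sum>s'\<in>UNIV. \<bar>pw Q w n s'\<bar>)" for n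
      by (rule member_le_sum[of s UNIV "\<lambda>s'. \<bar>pw Q w n s'\<bar>"]) auto
    then have nb: "norm (?f n) \<le> \<gamma> n * (\<Sum>s\<in>UNIV. \<bar>w s\<bar>)" for n
      using g(3) w0 fw by (metis order_trans real_norm_def)
    have sm: "summable (\<lambda>n. \<gamma> n * (\<Sum>s\<in>UNIV. \<bar>w s\<bar>))" by (rule summable_mult2[OF g(1)])
    have sf: "summable ?f" by (rule summable_comparison_test'[where N=0, OF sm nb])
    have "(\<lambda>n. \<Sum>i<n. ?f i) \<longlonglongrightarrow> suminf ?f" by (rule summable_LIMSEQ[OF sf])
    then have "(\<lambda>n. mstep Q 0 s0 s + (\<Sum>i<n. ?f i)) \<longlonglongrightarrow> mstep Q 0 s0 s + suminf ?f"
      by (rule tendsto_add[OF tendsto_const])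
    moreover have "mstep Q 0 s0 s + (\<Sum>i<n. ?f i) = mstep Q n s0 s" for n
      using sum_lessThan_telescope[of "\<lambda>i. mstep Q i s0 s" n] by simp
    ultimately show ?thesis unfolding convergent_def by auto
  qed
  define d where "d s = lim (\<lambda>n. mstep Q n s0 s)" for s
  have dl: "(\<lambda>n. mstep Q n s0 s) \<longlonglongrightarrow> d s" for s
    unfolding d_def using conv convergent_LIMSEQ_iff by blast
  have dst: "stationary Q d"
  proof -
    have "d s \<ge> 0" for s
      by (rule LIMSEQ_le_const[OF dl]) (use mstep_nonneg[OF Q] in auto)
    moreover have "(\<Sum>s\<in>UNIV. d s) = 1"
    proof -
      have "(\<lambda>n. \<Sum>s\<in>UNIV. mstep Q n s0 s) \<longlonglongrightarrow> (\<Sum>s\<in>UNIV. d s)"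
        by (rule tendsto_sum) (rule dl)
      moreover have "(\<lambda>n. \<Sum>s\<in>UNIV. mstep Q n s0 s) = (\<lambda>n. 1)" by (simp add: mstep_rowsum[OF Q])
      ultimately have "(\<lambda>n. 1::real) \<longlonglongrightarrow> (\<Sum>s\<in>UNIV. d s)" by simp
      then show ?thesis using LIMSEQ_unique[OF tendsto_const] by metis
    qed
    moreover have "(\<Sum>s\<in>UNIV. d s * Q s s') = d s'" for s'
    proof -
      have "(\<lambda>n. \<Sum>s\<in>UNIV. mstep Q n s0 s * Q s s') \<longlonglongrightarrow> (\<Sum>s\<in>UNIV. d s * Q s s')"
        by (intro tendsto_sum tendsto_mult_right dl)
      moreover have "(\<lambda>n. \<Sum>s\<in>UNIV. mstep Q n s0 s * Q s s') \<longlonglongrightarrow> d s'"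
        using LIMSEQ_Suc[OF dl[of s']] by simp
      ultimately show ?thesis by (rule LIMSEQ_unique)
    qed
    ultimately show ?thesis by (simp add: stationary_def is_dist_def)
  qed
  have the: "(THE d. stationary Q d) = d"
    by (rule the_equality[where P="stationary Q", OF dst]) (rule uniq[OF _ dst])
  show "stationary Q (THE d. stationary Q d)" unfolding the by (rule dst)
  show "(\<lambda>n. mstep Q n s0 s') \<longlonglongrightarrow> (THE d. stationary Q d) s'" unfolding the by (rule dl)
qed

lemma stoch_Ppi: assumes "is_kernel P" "is_policy p" shows "stoch (Ppi P p)"
proof -
  have "0 \<le> Ppi P p s s'" for s s'
    using assms unfolding Ppi_def is_kernel_def is_policy_def is_dist_def
    by (auto intro!: sum_nonneg mult_nonneg_nonneg)
  moreover have "(\<Sum>s'\<in>UNIV. Ppi P p s s') = 1" for s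
  proof -
    have "(\<Sum>s'\<in>UNIV. Ppi P p s s') = (\<Sum>a\<in>UNIV. p s a * (\<Sum>s'\<in>UNIV. P s a s'))"
      unfolding Ppi_def by (rule swap_mult)
    also have "\<dots> = 1" using assms unfolding is_kernel_def is_policy_def is_dist_def by simp
    finally show ?thesis .
  qed
  ultimately show ?thesis by (simp add: stoch_def)
qed

lemma ergodic_facts:
  fixes P :: "'s::finite \<Rightarrow> 'a::finite \<Rightarrow> 's \<Rightarrow> real"
  assumes K: "is_kernel P" and E: "ergodic P" and p: "is_policy p"
  shows "\<exists>\<gamma>. summable \<gamma> \<and> (\<forall>n. 0 \<le> \<gamma> n) \<and> (\<forall>x n. (\<Sum>s\<in>UNIV. x s) = 0 \<longrightarrow>
            (\<Sum>s'\<in>UNIV. \<bar>pw (Ppi P p) x n s'\<bar>) \<le> \<gamma> n * (\<Sum>s\<in>UNIV. \<bar>x s\<bar>))"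
    and "stationary (Ppi P p) (statdist P p)"
    and "(\<lambda>n. mstep (Ppi P p) n s0 s') \<longlonglongrightarrow> statdist P p s'"
proof -
  have "irreducible_chain (Ppi P p)" "aperiodic_chain (Ppi P p)" using E p unfolding ergodic_def by auto
  note c = chain_main[OF stoch_Ppi[OF K p] this]
  show "\<exists>\<gamma>. summable \<gamma> \<and> (\<forall>n. 0 \<le> \<gamma> n) \<and> (\<forall>x n. (\<Sum>s\<in>UNIV. x s) = 0 \<longrightarrow>
            (\<Sum>s'\<in>UNIV. \<bar>pw (Ppi P p) x n s'\<bar>) \<le> \<gamma> n * (\<Sum>s\<in>UNIV. \<bar>x s\<bar>))" by (rule c(1))
  show "stationary (Ppi P p) (statdist P p)" unfolding statdist_def by (rule c(2))
  show "(\<lambda>n. mstep (Ppi P p) n s0 s') \<longlonglongrightarrow> statdist P p s'" unfolding statdist_def by (rule c(3))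
qed

lemma delta2: fixes f :: "'s::finite \<Rightarrow> 'a::finite \<Rightarrow> real"
  shows "(\<Sum>u\<in>UNIV. \<Sum>b\<in>UNIV. (if u = s \<and> b = a then 1 else 0) * f u b) = f s a"
proof -
  have "(\<Sum>b\<in>UNIV. (if u = s \<and> b = a then 1 else 0) * f u b) = (if s = u then f u a else 0)" for u
  proof (cases "u = s")
    case True
    have "(\<Sum>b\<in>UNIV. (if u = s \<and> b = a then 1 else 0) * f u b) = (\<Sum>b\<in>UNIV. (if a = b then 1 else 0) * f u b)"
      by (rule sum.cong) (auto simp: True)
    also have "\<dots> = f u a" by (rule delta_sum)
    finally show ?thesis using True by simp
  qed auto
  then show ?thesis by (simp add: sum.delta)
qed

lemma sadist_Suc:
  "sadist P p s a (Suc t) s' a' = pw (Ppi P p) (P s a) t s' * p s' a'"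
proof (induction t arbitrary: s' a')
  case 0
  show ?case by (simp add: delta2 pw_0)
next
  case (Suc t)
  have "sadist P p s a (Suc (Suc t)) s' a' =
        (\<Sum>u\<in>UNIV. \<Sum>b\<in>UNIV. sadist P p s a (Suc t) u b * P u b s') * p s' a'"
    by (rule sadist.simps(2))
  also have "\<dots> = (\<Sum>u\<in>UNIV. \<Sum>b\<in>UNIV. pw (Ppi P p) (P s a) t u * (p u b * P u b s')) * p s' a'"
    by (simp only: Suc mult.assoc)
  also have "\<dots> = (\<Sum>u\<in>UNIV. pw (Ppi P p) (P s a) t u * Ppi P p u s') * p s' a'"
    by (simp add: Ppi_def sum_distrib_left)
  also have "\<dots> = pw (Ppi P p) (P s a) (Suc t) s' * p s' a'"
    by (simp add: pw_Suc)
  finally show ?case .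
qed

definition gp :: "('s \<Rightarrow> 'a::finite \<Rightarrow> real) \<Rightarrow> ('s \<Rightarrow> 'a \<Rightarrow> real) \<Rightarrow> 's \<Rightarrow> real" where
  "gp p g s = (\<Sum>a\<in>UNIV. p s a * g s a)"

definition Mv :: "('s::finite \<Rightarrow> 'a::finite \<Rightarrow> 's \<Rightarrow> real) \<Rightarrow> ('s \<Rightarrow> 'a \<Rightarrow> real) \<Rightarrow> ('s \<Rightarrow> 'a \<Rightarrow> real) \<Rightarrow> nat \<Rightarrow> 's \<Rightarrow> real" where
  "Mv P p g t u = (\<Sum>v\<in>UNIV. mstep (Ppi P p) t u v * gp p g v)"

definition Hs :: "('s::finite \<Rightarrow> 'a::finite \<Rightarrow> 's \<Rightarrow> real) \<Rightarrow> ('s \<Rightarrow> 'a \<Rightarrow> real) \<Rightarrow> ('s \<Rightarrow> 'a \<Rightarrow> real) \<Rightarrow> nat \<Rightarrow> 's \<Rightarrow> 'a \<Rightarrow> real" where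
  "Hs P p g t s a = (\<Sum>s'\<in>UNIV. \<Sum>a'\<in>UNIV. sadist P p s a t s' a' * g s' a') - Jv P p g"

lemma Qf_Hs: "Qf P p g s a = (\<Sum>t. Hs P p g t s a)"
  by (simp add: Qf_def Hs_def)

lemma Hs_0: "Hs P p g 0 s a = g s a - Jv P p g"
  by (simp only: Hs_def sadist.simps delta2)

lemma E_Suc: "(\<Sum>s'\<in>UNIV. \<Sum>a'\<in>UNIV. sadist P p s a (Suc t) s' a' * g s' a') = (\<Sum>u\<in>UNIV. P s a u * Mv P p g t u)"
proof -
  have "(\<Sum>s'\<in>UNIV. \<Sum>a'\<in>UNIV. sadist P p s a (Suc t) s' a' * g s' a')
      = (\<Sum>s'\<in>UNIV. pw (Ppi P p) (P s a) t s' * gp p g s')"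
    by (simp del: sadist.simps add: sadist_Suc gp_def sum_distrib_left mult.assoc)
  also have "\<dots> = (\<Sum>s'\<in>UNIV. \<Sum>u\<in>UNIV. P s a u * (mstep (Ppi P p) t u s' * gp p g s'))"
    by (simp add: pw_def sum_distrib_right mult.assoc)
  also have "\<dots> = (\<Sum>u\<in>UNIV. P s a u * Mv P p g t u)"
    unfolding Mv_def by (rule swap_mult)
  finally show ?thesis .
qed

lemma Mv_Suc: "Mv P p g (Suc t) u = (\<Sum>w\<in>UNIV. Ppi P p u w * Mv P p g t w)"
proof -
  have m: "mstep (Ppi P p) (Suc t) u v = (\<Sum>w\<in>UNIV. Ppi P p u w * mstep (Ppi P p) t w v)" for v
    using mstep_add[of "Ppi P p" 1 t u v] by (simp add: mstep_1 del: mstep.simps)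
  have "Mv P p g (Suc t) u = (\<Sum>v\<in>UNIV. \<Sum>w\<in>UNIV. Ppi P p u w * (mstep (Ppi P p) t w v * gp p g v))"
    unfolding Mv_def m by (simp add: sum_distrib_right mult.assoc)
  also have "\<dots> = (\<Sum>w\<in>UNIV. Ppi P p u w * Mv P p g t w)"
    unfolding Mv_def by (rule swap_mult)
  finally show ?thesis .
qed

lemma Mv_0: "Mv P p g 0 u = gp p g u"
  by (simp add: Mv_def delta_sum)

lemma Jv_gp: "Jv P p g = (\<Sum>s\<in>UNIV. statdist P p s * gp p g s)"
  by (simp add: Jv_def occ_def gp_def sum_distrib_left mult.assoc)

lemma pol_sum1: "is_policy p \<Longrightarrow> (\<Sum>a\<in>UNIV. p s a) = 1"
  by (simp add: is_policy_def is_dist_def)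

lemma ker_sum1: "is_kernel P \<Longrightarrow> (\<Sum>u\<in>UNIV. P s a u) = 1"
  by (simp add: is_kernel_def is_dist_def)

lemma sum_const_mult1: "(\<Sum>i\<in>A. w i) = 1 \<Longrightarrow> (\<Sum>i\<in>A. w i * (f i - c)) = (\<Sum>i\<in>A. w i * f i) - (c::real)"
  by (simp add: right_diff_distrib sum_subtractf sum_distrib_right[symmetric])

lemma Hs_Suc: assumes K: "is_kernel P"
  shows "Hs P p g (Suc t) s a = (\<Sum>u\<in>UNIV. P s a u * (Mv P p g t u - Jv P p g))"
  unfolding Hs_def E_Suc by (rule sum_const_mult1[symmetric]) (rule ker_sum1[OF K])

lemma VH: assumes K: "is_kernel P" and p: "is_policy p"
  shows "(\<Sum>a'\<in>UNIV. p s' a' * Hs P p g t s' a') = Mv P p g t s' - Jv P p g"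
proof (cases t)
  case 0
  show ?thesis unfolding 0 Hs_0 Mv_0 gp_def
    by (rule sum_const_mult1) (rule pol_sum1[OF p])
next
  case (Suc t')
  let ?J = "Jv P p g"
  have "(\<Sum>a'\<in>UNIV. p s' a' * Hs P p g t s' a')
      = (\<Sum>a'\<in>UNIV. \<Sum>w\<in>UNIV. p s' a' * P s' a' w * (Mv P p g t' w - ?J))"
    unfolding Suc Hs_Suc[OF K] by (simp add: sum_distrib_left mult.assoc)
  also have "\<dots> = (\<Sum>w\<in>UNIV. \<Sum>a'\<in>UNIV. p s' a' * P s' a' w * (Mv P p g t' w - ?J))"
    by (rule sum.swap)
  also have "\<dots> = (\<Sum>w\<in>UNIV. Ppi P p s' w * (Mv P p g t' w - ?J))"
    by (simp add: Ppi_def sum_distrib_right)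
  also have "\<dots> = (\<Sum>w\<in>UNIV. Ppi P p s' w * Mv P p g t' w) - ?J"
    by (rule sum_const_mult1) (use stoch_Ppi[OF K p] in \<open>simp add: stoch_def\<close>)
  also have "\<dots> = Mv P p g t s' - ?J" by (simp add: Suc Mv_Suc)
  finally show ?thesis .
qed

lemma abs_sum_le_L1:
  fixes x y :: "'s::finite \<Rightarrow> real"
  shows "\<bar>\<Sum>v\<in>UNIV. x v * y v\<bar> \<le> (\<Sum>v\<in>UNIV. \<bar>x v\<bar>) * (\<Sum>v\<in>UNIV. \<bar>y v\<bar>)"
proof -
  have "\<bar>\<Sum>v\<in>UNIV. x v * y v\<bar> \<le> (\<Sum>v\<in>UNIV. \<bar>x v\<bar> * \<bar>y v\<bar>)"
    by (rule order_trans[OF sum_abs]) (simp add: abs_mult)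
  also have "\<dots> \<le> (\<Sum>v\<in>UNIV. (\<Sum>v\<in>UNIV. \<bar>x v\<bar>) * \<bar>y v\<bar>)"
    by (rule sum_mono, rule mult_right_mono)
       (auto intro: member_le_sum[of _ UNIV "\<lambda>v. \<bar>x v\<bar>", simplified])
  also have "\<dots> = (\<Sum>v\<in>UNIV. \<bar>x v\<bar>) * (\<Sum>v\<in>UNIV. \<bar>y v\<bar>)" by (simp add: sum_distrib_left)
  finally show ?thesis .
qed

lemma Mv_bound:
  fixes P :: "'s::finite \<Rightarrow> 'a::finite \<Rightarrow> 's \<Rightarrow> real"
  assumes K: "is_kernel P" and E: "ergodic P" and p: "is_policy p"
  shows "\<exists>\<gamma>. summable \<gamma> \<and> (\<forall>n. 0 \<le> \<gamma> n) \<and> (\<forall>t u. \<bar>Mv P p g t u - Jv P p g\<bar> \<le> \<gamma> t)"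
proof -
  obtain \<gamma> where g: "summable \<gamma>" "\<forall>n. 0 \<le> \<gamma> n" "\<forall>x n. (\<Sum>s\<in>UNIV. x s) = 0 \<longrightarrow>
            (\<Sum>s'\<in>UNIV. \<bar>pw (Ppi P p) x n s'\<bar>) \<le> \<gamma> n * (\<Sum>s\<in>UNIV. \<bar>x s\<bar>)"
    using ergodic_facts(1)[OF K E p] by blast
  have st: "stationary (Ppi P p) (statdist P p)" by (rule ergodic_facts(2)[OF K E p])
  let ?d = "statdist P p"
  have dd: "is_dist ?d" using st by (simp add: stationary_def)
  define B where "B = (\<Sum>v\<in>UNIV. \<bar>gp p g v\<bar>)"
  have B0: "0 \<le> B" unfolding B_def by (simp add: sum_nonneg)
  have "\<bar>Mv P p g t u - Jv P p g\<bar> \<le> \<gamma> t * 2 * B" for t u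
  proof -
    define x where "x w = (if u = w then 1 else 0) - ?d w" for w
    have x0: "(\<Sum>w\<in>UNIV. x w) = 0" using dd by (simp add: x_def sum_subtractf is_dist_def)
    have xl: "(\<Sum>w\<in>UNIV. \<bar>x w\<bar>) \<le> 2"
    proof -
      have "(\<Sum>w\<in>UNIV. \<bar>x w\<bar>) \<le> (\<Sum>w\<in>UNIV. (if u = w then 1 else 0) + ?d w)"
      proof (rule sum_mono)
        fix w have "0 \<le> ?d w" using dd by (simp add: is_dist_def)
        then show "\<bar>x w\<bar> \<le> (if u = w then 1 else 0) + ?d w" by (simp add: x_def abs_le_iff)
      qed
      also have "\<dots> = 2" using dd by (simp add: sum.distrib is_dist_def)
      finally show ?thesis .
    qed
    have e: "Mv P p g t u - Jv P p g = (\<Sum>v\<in>UNIV. pw (Ppi P p) x t v * gp p g v)"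
    proof -
      have "pw (Ppi P p) x t v = mstep (Ppi P p) t u v - ?d v" for v
        unfolding x_def pw_diff pw_stat[OF st] by (simp add: pw_def delta_sum)
      then show ?thesis by (simp add: Mv_def Jv_gp left_diff_distrib sum_subtractf)
    qed
    have "\<bar>Mv P p g t u - Jv P p g\<bar> \<le> (\<Sum>v\<in>UNIV. \<bar>pw (Ppi P p) x t v\<bar>) * B"
      unfolding e B_def by (rule abs_sum_le_L1)
    also have "\<dots> \<le> (\<gamma> t * 2) * B"
    proof (rule mult_right_mono[OF _ B0])
      have "(\<Sum>v\<in>UNIV. \<bar>pw (Ppi P p) x t v\<bar>) \<le> \<gamma> t * (\<Sum>w\<in>UNIV. \<bar>x w\<bar>)" using g(3) x0 by blast
      also have "\<dots> \<le> \<gamma> t * 2" by (rule mult_left_mono[OF xl]) (use g(2) in auto)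
      finally show "(\<Sum>v\<in>UNIV. \<bar>pw (Ppi P p) x t v\<bar>) \<le> \<gamma> t * 2" .
    qed
    finally show ?thesis by simp
  qed
  moreover have "summable (\<lambda>t. \<gamma> t * 2 * B)" using g(1) by (intro summable_mult2)
  moreover have "\<forall>t. 0 \<le> \<gamma> t * 2 * B" using g(2) B0 by simp
  ultimately show ?thesis by blast
qed

lemma Hs_summable:
  fixes P :: "'s::finite \<Rightarrow> 'a::finite \<Rightarrow> 's \<Rightarrow> real"
  assumes K: "is_kernel P" and E: "ergodic P" and p: "is_policy p"
  shows "summable (\<lambda>t. Hs P p g t s a)"
proof -
  obtain \<gamma> where g: "summable \<gamma>" "\<forall>n. 0 \<le> \<gamma> n" "\<forall>t u. \<bar>Mv P p g t u - Jv P p g\<bar> \<le> \<gamma> t"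
    using Mv_bound[OF K E p] by blast
  have "norm (Hs P p g (Suc t) s a) \<le> real CARD('s) * \<gamma> t" for t
  proof -
    have "norm (Hs P p g (Suc t) s a) \<le> (\<Sum>u\<in>UNIV. \<bar>P s a u\<bar>) * (\<Sum>u\<in>UNIV. \<bar>Mv P p g t u - Jv P p g\<bar>)"
      unfolding Hs_Suc[OF K] real_norm_def by (rule abs_sum_le_L1)
    also have "\<dots> = (\<Sum>u\<in>UNIV. P s a u) * (\<Sum>u\<in>UNIV. \<bar>Mv P p g t u - Jv P p g\<bar>)"
      using K by (simp add: is_kernel_def is_dist_def)
    also have "\<dots> \<le> 1 * (\<Sum>u\<in>(UNIV::'s set). \<gamma> t)"
      using ker_sum1[OF K] sum_mono[of UNIV "\<lambda>u. \<bar>Mv P p g t u - Jv P p g\<bar>" "\<lambda>u. \<gamma> t"] g(3) by simp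
    finally show ?thesis by simp
  qed
  then have "summable (\<lambda>t. Hs P p g (Suc t) s a)"
    by (intro summable_comparison_test'[where N=0, OF summable_mult[OF g(1)]])
  then show ?thesis using summable_Suc_iff[of "\<lambda>t. Hs P p g t s a"] by simp
qed

lemma Bellman:
  fixes P :: "'s::finite \<Rightarrow> 'a::finite \<Rightarrow> 's \<Rightarrow> real"
  assumes K: "is_kernel P" and E: "ergodic P" and p: "is_policy p"
  shows "Qf P p g s a = g s a - Jv P p g + (\<Sum>u\<in>UNIV. P s a u * Vf P p g u)"
proof -
  have hs: "summable (\<lambda>t. Hs P p g t s a)" for s a by (rule Hs_summable[OF K E p])
  have hS: "Hs P p g (Suc t) s a = (\<Sum>u\<in>UNIV. P s a u * (\<Sum>a'\<in>UNIV. p u a' * Hs P p g t u a'))" for t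
    unfolding Hs_Suc[OF K] VH[OF K p] ..
  have "Qf P p g s a = Hs P p g 0 s a + (\<Sum>t. Hs P p g (Suc t) s a)"
    unfolding Qf_Hs suminf_split_head[OF hs] by simp
  also have "(\<Sum>t. Hs P p g (Suc t) s a) = (\<Sum>t. \<Sum>u\<in>UNIV. \<Sum>a'\<in>UNIV. P s a u * p u a' * Hs P p g t u a')"
    unfolding hS by (simp add: sum_distrib_left mult.assoc)
  also have "\<dots> = (\<Sum>u\<in>UNIV. \<Sum>a'\<in>UNIV. \<Sum>t. P s a u * p u a' * Hs P p g t u a')"
  proof -
    have sf: "summable (\<lambda>t. P s a u * p u a' * Hs P p g t u a')" for u a' by (rule summable_mult[OF hs])
    have "(\<Sum>t. \<Sum>u\<in>UNIV. \<Sum>a'\<in>UNIV. P s a u * p u a' * Hs P p g t u a')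
        = (\<Sum>u\<in>UNIV. \<Sum>t. \<Sum>a'\<in>UNIV. P s a u * p u a' * Hs P p g t u a')"
      by (rule suminf_sum) (rule summable_sum, rule sf)
    also have "\<dots> = (\<Sum>u\<in>UNIV. \<Sum>a'\<in>UNIV. \<Sum>t. P s a u * p u a' * Hs P p g t u a')"
      by (rule sum.cong[OF refl], rule suminf_sum, rule sf)
    finally show ?thesis .
  qed
  also have "\<dots> = (\<Sum>u\<in>UNIV. P s a u * Vf P p g u)"
    by (simp only: suminf_mult[OF hs]) (simp add: Vf_def Qf_Hs sum_distrib_left mult.assoc)
  finally show ?thesis by (simp add: Hs_0)
qed

lemma PDL:
  fixes P :: "'s::finite \<Rightarrow> 'a::finite \<Rightarrow> 's \<Rightarrow> real"
  assumes K: "is_kernel P" and E: "ergodic P" and p: "is_policy p" and ps: "is_policy ps"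
  shows "(\<Sum>s\<in>UNIV. \<Sum>a\<in>UNIV. occ P ps s a * Adv P p g s a) = Jv P ps g - Jv P p g"
proof -
  let ?d = "statdist P ps"
  let ?V = "Vf P p g"
  let ?J = "Jv P p g"
  have st: "stationary (Ppi P ps) ?d" by (rule ergodic_facts(2)[OF K E ps])
  have dd: "is_dist ?d" using st by (simp add: stationary_def)
  have occ1: "(\<Sum>s\<in>UNIV. \<Sum>a\<in>UNIV. occ P ps s a) = 1"
    using dd pol_sum1[OF ps] by (simp add: occ_def sum_distrib_left[symmetric] is_dist_def)
  have A: "(\<Sum>s\<in>UNIV. \<Sum>a\<in>UNIV. occ P ps s a * (\<Sum>u\<in>UNIV. P s a u * ?V u)) = (\<Sum>u\<in>UNIV. ?d u * ?V u)"
  proof -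
    have "(\<Sum>s\<in>UNIV. \<Sum>a\<in>UNIV. occ P ps s a * (\<Sum>u\<in>UNIV. P s a u * ?V u))
        = (\<Sum>s\<in>UNIV. \<Sum>a\<in>UNIV. \<Sum>u\<in>UNIV. ?d s * (ps s a * P s a u) * ?V u)"
      by (simp add: occ_def sum_distrib_left mult.assoc)
    also have "\<dots> = (\<Sum>s\<in>UNIV. \<Sum>u\<in>UNIV. \<Sum>a\<in>UNIV. ?d s * (ps s a * P s a u) * ?V u)"
      by (rule sum.cong[OF refl], rule sum.swap)
    also have "\<dots> = (\<Sum>u\<in>UNIV. \<Sum>s\<in>UNIV. \<Sum>a\<in>UNIV. ?d s * (ps s a * P s a u) * ?V u)"
      by (rule sum.swap)
    also have "\<dots> = (\<Sum>u\<in>UNIV. (\<Sum>s\<in>UNIV. ?d s * Ppi P ps s u) * ?V u)"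
      by (simp add: Ppi_def sum_distrib_left sum_distrib_right)
    also have "\<dots> = (\<Sum>u\<in>UNIV. ?d u * ?V u)"
      using st by (simp add: stationary_def)
    finally show ?thesis .
  qed
  have B: "(\<Sum>s\<in>UNIV. \<Sum>a\<in>UNIV. occ P ps s a * ?V s) = (\<Sum>u\<in>UNIV. ?d u * ?V u)"
    using pol_sum1[OF ps] by (simp add: occ_def sum_distrib_right[symmetric] mult.commute mult.left_commute)
  have "(\<Sum>s\<in>UNIV. \<Sum>a\<in>UNIV. occ P ps s a * Adv P p g s a)
      = (\<Sum>s\<in>UNIV. \<Sum>a\<in>UNIV. occ P ps s a * g s a - occ P ps s a * ?J
           + occ P ps s a * (\<Sum>u\<in>UNIV. P s a u * ?V u) - occ P ps s a * ?V s)"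
    by (simp add: Adv_def Bellman[OF K E p] algebra_simps)
  also have "\<dots> = Jv P ps g - (\<Sum>s\<in>UNIV. \<Sum>a\<in>UNIV. occ P ps s a) * ?J
      + (\<Sum>s\<in>UNIV. \<Sum>a\<in>UNIV. occ P ps s a * (\<Sum>u\<in>UNIV. P s a u * ?V u))
      - (\<Sum>s\<in>UNIV. \<Sum>a\<in>UNIV. occ P ps s a * ?V s)"
    by (simp add: Jv_def sum.distrib sum_subtractf sum_distrib_right)
  also have "\<dots> = Jv P ps g - ?J" unfolding A B occ1 by simp
  finally show ?thesis .
qed

lemma linear_vec_expand:
  fixes D :: "real^'d \<Rightarrow> real"
  assumes "linear D"
  shows "D h = (\<chi> i. D (axis i 1)) \<bullet> h"
proof -
  have "D h = D (\<Sum>i\<in>UNIV. h$i *\<^sub>R axis i 1)"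
    using basis_expansion[of h] by (simp add: scalar_mult_eq_scaleR)
  also have "\<dots> = (\<Sum>i\<in>UNIV. h$i * D (axis i 1))"
    by (simp add: linear_sum[OF assms] linear_cmul[OF assms] o_def)
  also have "\<dots> = (\<chi> i. D (axis i 1)) \<bullet> h"
    by (simp add: inner_vec_def mult.commute)
  finally show ?thesis .
qed

lemma score_deriv:
  fixes pol :: "real^'d \<Rightarrow> 's \<Rightarrow> 'a \<Rightarrow> real"
  assumes pos: "\<forall>\<theta> s a. 0 < pol \<theta> s a"
    and diff: "\<forall>\<theta> s a. (\<lambda>t. pol t s a) differentiable (at \<theta>)"
  shows "((\<lambda>t. ln (pol t s a)) has_derivative (\<lambda>h. score pol \<theta> s a \<bullet> h)) (at \<theta>)"
proof -
  let ?f = "\<lambda>t. ln (pol t s a)"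
  obtain D where D: "((\<lambda>t. pol t s a) has_derivative D) (at \<theta>)"
    using diff unfolding differentiable_def by blast
  have "(?f has_derivative (\<lambda>h. D h * inverse (pol \<theta> s a))) (at \<theta>)"
    using D pos by (auto intro!: derivative_eq_intros)
  then have fd: "?f differentiable (at \<theta>)" unfolding differentiable_def by blast
  then have fD: "(?f has_derivative frechet_derivative ?f (at \<theta>)) (at \<theta>)"
    by (simp add: frechet_derivative_works)
  have lin: "linear (frechet_derivative ?f (at \<theta>))"
    using fD by (rule has_derivative_linear)
  have "frechet_derivative ?f (at \<theta>) = (\<lambda>h. score pol \<theta> s a \<bullet> h)"
    by (rule ext) (subst linear_vec_expand[OF lin], simp add: score_def grad_def)
  then show ?thesis using fD by simp
qed

lemma descent:
  fixes pol :: "real^'d \<Rightarrow> 's \<Rightarrow> 'a \<Rightarrow> real"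
  assumes pos: "\<forall>\<theta> s a. 0 < pol \<theta> s a"
    and diff: "\<forall>\<theta> s a. (\<lambda>t. pol t s a) differentiable (at \<theta>)"
    and lip: "\<forall>\<theta>1 \<theta>2 s a. norm (score pol \<theta>1 s a - score pol \<theta>2 s a) \<le> G2 * norm (\<theta>1 - \<theta>2)"
  shows "ln (pol \<theta> s a) + score pol \<theta> s a \<bullet> v - G2 / 2 * (norm v)\<^sup>2 \<le> ln (pol (\<theta> + v) s a)"
proof -
  define g where "g t = ln (pol (\<theta> + t *\<^sub>R v) s a)" for t :: real
  define c where "c = score pol \<theta> s a \<bullet> v"
  define h where "h t = g t - g 0 - t * c + (G2 / 2 * (norm v)\<^sup>2) * (t * t)" for t :: real
  have gd: "(g has_real_derivative (score pol (\<theta> + t *\<^sub>R v) s a \<bullet> v)) (at t)" for t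
  proof -
    have l: "((\<lambda>t::real. \<theta> + t *\<^sub>R v) has_derivative (\<lambda>h. h *\<^sub>R v)) (at t)"
      by (auto intro!: derivative_eq_intros)
    have "(g has_derivative (\<lambda>h. score pol (\<theta> + t *\<^sub>R v) s a \<bullet> (h *\<^sub>R v))) (at t)"
      unfolding g_def using has_derivative_compose[OF l score_deriv[OF pos diff]] by simp
    moreover have "(\<lambda>h. score pol (\<theta> + t *\<^sub>R v) s a \<bullet> (h *\<^sub>R v)) = (*) (score pol (\<theta> + t *\<^sub>R v) s a \<bullet> v)"
      by (rule ext) (simp add: mult.commute)
    ultimately show ?thesis by (simp add: has_field_derivative_def)
  qed
  have hd: "(h has_real_derivative (score pol (\<theta> + t *\<^sub>R v) s a \<bullet> v - c + G2 * t * (norm v)\<^sup>2)) (at t)" for t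
  proof -
    have "(h has_real_derivative (score pol (\<theta> + t *\<^sub>R v) s a \<bullet> v - 0 - 1 * c + (G2 / 2 * (norm v)\<^sup>2) * (1 * t + t * 1))) (at t)"
      unfolding h_def by (auto intro!: derivative_eq_intros gd)
    moreover have "score pol (\<theta> + t *\<^sub>R v) s a \<bullet> v - 0 - 1 * c + (G2 / 2 * (norm v)\<^sup>2) * (1 * t + t * 1)
       = score pol (\<theta> + t *\<^sub>R v) s a \<bullet> v - c + G2 * t * (norm v)\<^sup>2" by (simp add: algebra_simps)
    ultimately show ?thesis by (simp only:)
  qed
  have "h 0 \<le> h 1"
  proof (rule DERIV_nonneg_imp_nondecreasing[of 0 1 h])
    fix t :: real assume t: "0 \<le> t" "t \<le> 1"
    have "\<bar>score pol (\<theta> + t *\<^sub>R v) s a \<bullet> v - c\<bar> = \<bar>(score pol (\<theta> + t *\<^sub>R v) s a - score pol \<theta> s a) \<bullet> v\<bar>"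
      by (simp add: c_def inner_diff_left)
    also have "\<dots> \<le> norm (score pol (\<theta> + t *\<^sub>R v) s a - score pol \<theta> s a) * norm v"
      by (rule Cauchy_Schwarz_ineq2)
    also have "\<dots> \<le> (G2 * norm (t *\<^sub>R v)) * norm v"
    proof (rule mult_right_mono)
      have "norm (score pol (\<theta> + t *\<^sub>R v) s a - score pol \<theta> s a) \<le> G2 * norm ((\<theta> + t *\<^sub>R v) - \<theta>)"
        using lip by blast
      then show "norm (score pol (\<theta> + t *\<^sub>R v) s a - score pol \<theta> s a) \<le> G2 * norm (t *\<^sub>R v)" by simp
    qed simp
    also have "\<dots> = G2 * t * (norm v)\<^sup>2" using t by (simp add: power2_eq_square)
    finally have "0 \<le> score pol (\<theta> + t *\<^sub>R v) s a \<bullet> v - c + G2 * t * (norm v)\<^sup>2" by linarith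
    then show "\<exists>y. (h has_real_derivative y) (at t) \<and> 0 \<le> y" using hd by blast
  qed simp
  then show ?thesis by (simp add: h_def g_def c_def power2_eq_square)
qed

lemma score_cont:
  fixes pol :: "real^'d \<Rightarrow> 's \<Rightarrow> 'a \<Rightarrow> real"
  assumes lip: "\<forall>\<theta>1 \<theta>2 s a. norm (score pol \<theta>1 s a - score pol \<theta>2 s a) \<le> G2 * norm (\<theta>1 - \<theta>2)"
  shows "continuous_on UNIV (\<lambda>\<theta>. score pol \<theta> s a)"
proof (rule lipschitz_on_continuous_on)
  show "\<bar>G2\<bar>-lipschitz_on UNIV (\<lambda>\<theta>. score pol \<theta> s a)"
  proof (rule lipschitz_onI)
    fix x y :: "real^'d"
    have "dist (score pol x s a) (score pol y s a) \<le> G2 * norm (x - y)" using lip by (simp add: dist_norm)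
    also have "\<dots> \<le> \<bar>G2\<bar> * dist x y" by (simp add: dist_norm mult_right_mono)
    finally show "dist (score pol x s a) (score pol y s a) \<le> \<bar>G2\<bar> * dist x y" .
  qed simp
qed

lemma KL_nonneg:
  fixes p q :: "'a::finite \<Rightarrow> real"
  assumes p: "is_dist p" and q: "is_dist q" and qpos: "\<forall>a. 0 < q a"
  shows "0 \<le> KL p q"
proof -
  have "p a - q a \<le> (if p a = 0 then 0 else p a * ln (p a / q a))" for a
  proof (cases "p a = 0")
    case True then show ?thesis using qpos[rule_format, of a] by simp
  next
    case False
    have "0 \<le> p a" using p by (simp add: is_dist_def)
    then have pa: "0 < p a" using False by linarith
    have qa: "0 < q a" using qpos by simp
    have "ln (q a / p a) \<le> q a / p a - 1" by (rule ln_le_minus_one) (use pa qa in simp)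
    moreover have "ln (p a / q a) = - ln (q a / p a)" using pa qa by (simp add: ln_div)
    ultimately have "p a * (1 - q a / p a) \<le> p a * ln (p a / q a)"
      using pa by (intro mult_left_mono) auto
    moreover have "p a * (1 - q a / p a) = p a - q a" using pa by (simp add: field_simps)
    ultimately show ?thesis using False by simp
  qed
  then have "(\<Sum>a\<in>UNIV. p a - q a) \<le> KL p q" unfolding KL_def by (rule sum_mono)
  then show ?thesis using p q by (simp add: sum_subtractf is_dist_def)
qed

lemma KL_diff:
  fixes p q1 q2 :: "'a::finite \<Rightarrow> real"
  assumes p: "\<forall>a. 0 \<le> p a" and q1: "\<forall>a. 0 < q1 a" and q2: "\<forall>a. 0 < q2 a"
  shows "KL p q1 - KL p q2 = (\<Sum>a\<in>UNIV. p a * (ln (q2 a) - ln (q1 a)))"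
proof -
  have "(if p a = 0 then 0 else p a * ln (p a / q1 a)) - (if p a = 0 then 0 else p a * ln (p a / q2 a))
        = p a * (ln (q2 a) - ln (q1 a))" for a
  proof (cases "p a = 0")
    case False
    have "0 \<le> p a" using p by simp
    then have pa: "0 < p a" using False by linarith
    have "ln (p a / q1 a) = ln (p a) - ln (q1 a)" using pa q1[rule_format, of a] by (simp add: ln_div)
    moreover have "ln (p a / q2 a) = ln (p a) - ln (q2 a)" using pa q2[rule_format, of a] by (simp add: ln_div)
    ultimately show ?thesis using False by (simp add: right_diff_distrib)
  qed simp
  then show ?thesis unfolding KL_def sum_subtractf[symmetric] by simp
qed

lemma weighted_cs:
  fixes w y :: "'a \<Rightarrow> real"
  assumes fin: "finite A" and w: "\<forall>i\<in>A. 0 \<le> w i" and w1: "(\<Sum>i\<in>A. w i) = 1"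
  shows "(\<Sum>i\<in>A. w i * y i)\<^sup>2 \<le> (\<Sum>i\<in>A. w i * (y i)\<^sup>2)"
proof -
  define m where "m = (\<Sum>i\<in>A. w i * y i)"
  have "0 \<le> (\<Sum>i\<in>A. w i * (y i - m)\<^sup>2)" using w by (intro sum_nonneg) auto
  also have "\<dots> = (\<Sum>i\<in>A. w i * (y i)\<^sup>2 - 2 * m * (w i * y i) + m\<^sup>2 * w i)"
    by (rule sum.cong[OF refl]) (simp add: power2_eq_square algebra_simps)
  also have "\<dots> = (\<Sum>i\<in>A. w i * (y i)\<^sup>2) - 2 * m * (\<Sum>i\<in>A. w i * y i) + m\<^sup>2 * (\<Sum>i\<in>A. w i)"
    by (simp only: sum.distrib sum_subtractf sum_distrib_left)
  also have "\<dots> = (\<Sum>i\<in>A. w i * (y i)\<^sup>2) - m\<^sup>2" using w1 by (simp add: m_def power2_eq_square)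
  finally show ?thesis by (simp add: m_def)
qed

lemma ennreal_rep_test: "enn2ereal (a + b) = enn2ereal a + enn2ereal b" "enn2ereal (a * b) = enn2ereal a * enn2ereal b"
  "(a \<le> b) = (enn2ereal a \<le> enn2ereal b)"
  by (simp_all add: plus_ennreal.rep_eq times_ennreal.rep_eq less_eq_ennreal.rep_eq)

lemma pol_meas:
  fixes pol :: "real^'d \<Rightarrow> 's \<Rightarrow> 'a \<Rightarrow> real"
  assumes diff: "\<forall>\<theta> s a. (\<lambda>t. pol t s a) differentiable (at \<theta>)"
    and Th: "Th \<in> borel_measurable M"
  shows "(\<lambda>x. pol (Th x) s a) \<in> borel_measurable M"
proof -
  have "continuous_on UNIV (\<lambda>t. pol t s a)"
    by (rule differentiable_imp_continuous_on) (use diff in \<open>simp add: differentiable_on_def differentiable_at_withinI\<close>)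
  then have "(\<lambda>t. pol t s a) \<in> borel_measurable borel" by (rule borel_measurable_continuous_onI)
  then show ?thesis using measurable_compose[OF Th] by blast
qed

lemma mstep_meas:
  fixes P :: "'s::finite \<Rightarrow> 'a::finite \<Rightarrow> 's \<Rightarrow> real" and pol :: "real^'d \<Rightarrow> 's \<Rightarrow> 'a \<Rightarrow> real"
  assumes diff: "\<forall>\<theta> s a. (\<lambda>t. pol t s a) differentiable (at \<theta>)"
    and Th: "Th \<in> borel_measurable M"
  shows "(\<lambda>x. mstep (Ppi P (pol (Th x))) n s0 s') \<in> borel_measurable M"
proof (induction n arbitrary: s')
  case 0 then show ?case by simp
next
  case (Suc n)
  have "(\<lambda>x. Ppi P (pol (Th x)) u s') \<in> borel_measurable M" for u
    unfolding Ppi_def by (intro borel_measurable_sum borel_measurable_times pol_meas[OF diff Th]) simp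
  then show ?case using Suc by (simp del: mstep.simps(1) add: borel_measurable_sum borel_measurable_times)
qed

lemma statdist_meas:
  fixes P :: "'s::finite \<Rightarrow> 'a::finite \<Rightarrow> 's \<Rightarrow> real" and pol :: "real^'d \<Rightarrow> 's \<Rightarrow> 'a \<Rightarrow> real"
  assumes K: "is_kernel P" and E: "ergodic P" and pp: "\<forall>\<theta>. is_policy (pol \<theta>)"
    and diff: "\<forall>\<theta> s a. (\<lambda>t. pol t s a) differentiable (at \<theta>)"
    and Th: "Th \<in> borel_measurable M"
  shows "(\<lambda>x. statdist P (pol (Th x)) s') \<in> borel_measurable M"
proof (rule borel_measurable_LIMSEQ_real)
  fix x show "(\<lambda>n. mstep (Ppi P (pol (Th x))) n undefined s') \<longlonglongrightarrow> statdist P (pol (Th x)) s'"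
    by (rule ergodic_facts(3)[OF K E pp[rule_format]])
next
  fix n show "(\<lambda>x. mstep (Ppi P (pol (Th x))) n undefined s') \<in> borel_measurable M"
    by (rule mstep_meas[OF diff Th])
qed

lemma Jv_meas:
  fixes P :: "'s::finite \<Rightarrow> 'a::finite \<Rightarrow> 's \<Rightarrow> real" and pol :: "real^'d \<Rightarrow> 's \<Rightarrow> 'a \<Rightarrow> real"
  assumes K: "is_kernel P" and E: "ergodic P" and pp: "\<forall>\<theta>. is_policy (pol \<theta>)"
    and diff: "\<forall>\<theta> s a. (\<lambda>t. pol t s a) differentiable (at \<theta>)"
    and Th: "Th \<in> borel_measurable M"
  shows "(\<lambda>x. Jv P (pol (Th x)) g) \<in> borel_measurable M"
  unfolding Jv_def occ_def
  by (intro borel_measurable_sum borel_measurable_times statdist_meas[OF K E pp diff Th] pol_meas[OF diff Th]) simp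

lemma score_meas:
  fixes pol :: "real^'d \<Rightarrow> 's \<Rightarrow> 'a \<Rightarrow> real"
  assumes lip: "\<forall>\<theta>1 \<theta>2 s a. norm (score pol \<theta>1 s a - score pol \<theta>2 s a) \<le> G2 * norm (\<theta>1 - \<theta>2)"
    and Th: "Th \<in> borel_measurable M"
  shows "(\<lambda>x. score pol (Th x) s a $ i) \<in> borel_measurable M"
proof -
  have "continuous_on UNIV (\<lambda>t. score pol t s a $ i)"
    by (intro continuous_on_component score_cont[OF lip])
  then have "(\<lambda>t. score pol t s a $ i) \<in> borel_measurable borel" by (rule borel_measurable_continuous_onI)
  then show ?thesis using measurable_compose[OF Th] by blast
qed

lemma weighted_cs2:
  fixes w y :: "'s::finite \<Rightarrow> 'a::finite \<Rightarrow> real"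
  assumes w: "\<forall>s a. 0 \<le> w s a" and w1: "(\<Sum>s\<in>UNIV. \<Sum>a\<in>UNIV. w s a) = 1"
  shows "(\<Sum>s\<in>UNIV. \<Sum>a\<in>UNIV. w s a * y s a)\<^sup>2 \<le> (\<Sum>s\<in>UNIV. \<Sum>a\<in>UNIV. w s a * (y s a)\<^sup>2)"
proof -
  have e: "(\<Sum>s\<in>UNIV. \<Sum>a\<in>UNIV. g s a) = (\<Sum>p\<in>UNIV \<times> UNIV. g (fst p) (snd p))" for g :: "'s \<Rightarrow> 'a \<Rightarrow> real"
    by (simp add: sum.cartesian_product split_def)
  show ?thesis unfolding e
    by (rule weighted_cs) (use w w1 in \<open>auto simp: e\<close>)
qed

lemma occ_facts:
  fixes P :: "'s::finite \<Rightarrow> 'a::finite \<Rightarrow> 's \<Rightarrow> real"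
  assumes K: "is_kernel P" and E: "ergodic P" and ps: "is_policy ps"
  shows "\<forall>s a. 0 \<le> occ P ps s a" "(\<Sum>s\<in>UNIV. \<Sum>a\<in>UNIV. occ P ps s a) = 1"
    "\<forall>s. 0 \<le> statdist P ps s"
proof -
  have dd: "is_dist (statdist P ps)" using ergodic_facts(2)[OF K E ps] by (simp add: stationary_def)
  then show "\<forall>s. 0 \<le> statdist P ps s" by (simp add: is_dist_def)
  show "\<forall>s a. 0 \<le> occ P ps s a" using dd ps by (simp add: occ_def is_dist_def is_policy_def)
  show "(\<Sum>s\<in>UNIV. \<Sum>a\<in>UNIV. occ P ps s a) = 1"
    using dd pol_sum1[OF ps] by (simp add: occ_def sum_distrib_left[symmetric] is_dist_def)
qed

lemma sqrt_bound:
  fixes m e :: real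
  assumes "m\<^sup>2 \<le> e"
  shows "- sqrt e \<le> m"
proof -
  have "\<bar>m\<bar> = sqrt (m\<^sup>2)" by simp
  also have "\<dots> \<le> sqrt e" by (rule real_sqrt_le_mono[OF assms])
  finally show ?thesis by linarith
qed

lemma pdl_bound:
  fixes P :: "'s::finite \<Rightarrow> 'a::finite \<Rightarrow> 's \<Rightarrow> real" and pol :: "real^'d \<Rightarrow> 's \<Rightarrow> 'a \<Rightarrow> real"
  assumes K: "is_kernel P" and E: "ergodic P" and pp: "is_policy (pol \<theta>)" and ps: "is_policy ps"
    and cmp: "(\<Sum>s\<in>UNIV. \<Sum>a\<in>UNIV. occ P ps s a *
          (score pol \<theta> s a \<bullet> natgrad P r c pol \<theta> l
             - Adv P (pol \<theta>) r s a - l * Adv P (pol \<theta>) c s a)\<^sup>2) \<le> eps"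
  shows "Lagr P r c ps l - Lagr P r c (pol \<theta>) l - sqrt eps
           \<le> (\<Sum>s\<in>UNIV. \<Sum>a\<in>UNIV. occ P ps s a * (score pol \<theta> s a \<bullet> natgrad P r c pol \<theta> l))"
proof -
  let ?\<nu> = "occ P ps"
  define y where "y s a = score pol \<theta> s a \<bullet> natgrad P r c pol \<theta> l - Adv P (pol \<theta>) r s a - l * Adv P (pol \<theta>) c s a" for s a
  note of = occ_facts[OF K E ps]
  have "(\<Sum>s\<in>UNIV. \<Sum>a\<in>UNIV. ?\<nu> s a * y s a)\<^sup>2 \<le> eps"
    using weighted_cs2[OF of(1) of(2), of y] cmp unfolding y_def by linarith
  then have m: "- sqrt eps \<le> (\<Sum>s\<in>UNIV. \<Sum>a\<in>UNIV. ?\<nu> s a * y s a)" by (rule sqrt_bound)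
  have A: "(\<Sum>s\<in>UNIV. \<Sum>a\<in>UNIV. ?\<nu> s a * (Adv P (pol \<theta>) r s a + l * Adv P (pol \<theta>) c s a))
      = Lagr P r c ps l - Lagr P r c (pol \<theta>) l"
  proof -
    have "(\<Sum>s\<in>UNIV. \<Sum>a\<in>UNIV. ?\<nu> s a * (Adv P (pol \<theta>) r s a + l * Adv P (pol \<theta>) c s a))
        = (\<Sum>s\<in>UNIV. \<Sum>a\<in>UNIV. ?\<nu> s a * Adv P (pol \<theta>) r s a) + l * (\<Sum>s\<in>UNIV. \<Sum>a\<in>UNIV. ?\<nu> s a * Adv P (pol \<theta>) c s a)"
      by (simp add: distrib_left sum.distrib sum_distrib_left mult.left_commute)
    also have "\<dots> = Lagr P r c ps l - Lagr P r c (pol \<theta>) l"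
      unfolding PDL[OF K E pp ps] Lagr_def by (simp add: algebra_simps)
    finally show ?thesis .
  qed
  have "(\<Sum>s\<in>UNIV. \<Sum>a\<in>UNIV. ?\<nu> s a * (score pol \<theta> s a \<bullet> natgrad P r c pol \<theta> l))
      = (\<Sum>s\<in>UNIV. \<Sum>a\<in>UNIV. ?\<nu> s a * y s a) + (\<Sum>s\<in>UNIV. \<Sum>a\<in>UNIV. ?\<nu> s a * (Adv P (pol \<theta>) r s a + l * Adv P (pol \<theta>) c s a))"
    by (simp add: y_def sum.distrib[symmetric] distrib_left[symmetric])
  then show ?thesis using m A by linarith
qed

lemma KL_step:
  fixes P :: "'s::finite \<Rightarrow> 'a::finite \<Rightarrow> 's \<Rightarrow> real" and pol :: "real^'d \<Rightarrow> 's \<Rightarrow> 'a \<Rightarrow> real"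
  assumes K: "is_kernel P" and E: "ergodic P" and ps: "is_policy ps"
    and pos: "\<forall>\<theta> s a. 0 < pol \<theta> s a"
    and diff: "\<forall>\<theta> s a. (\<lambda>t. pol t s a) differentiable (at \<theta>)"
    and lip: "\<forall>\<theta>1 \<theta>2 s a. norm (score pol \<theta>1 s a - score pol \<theta>2 s a) \<le> G2 * norm (\<theta>1 - \<theta>2)"
  shows "(\<Sum>s\<in>UNIV. \<Sum>a\<in>UNIV. occ P ps s a * (score pol \<theta> s a \<bullet> v)) - G2 / 2 * (norm v)\<^sup>2
         \<le> KL_term P ps (pol \<theta>) - KL_term P ps (pol (\<theta> + v))"
proof -
  note of = occ_facts[OF K E ps]
  have psn: "\<forall>a. 0 \<le> ps s a" for s using ps by (simp add: is_policy_def is_dist_def)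
  have "KL_term P ps (pol \<theta>) - KL_term P ps (pol (\<theta> + v))
      = (\<Sum>s\<in>UNIV. statdist P ps s * (KL (ps s) (pol \<theta> s) - KL (ps s) (pol (\<theta> + v) s)))"
    by (simp add: KL_term_def right_diff_distrib sum_subtractf)
  also have "\<dots> = (\<Sum>s\<in>UNIV. \<Sum>a\<in>UNIV. occ P ps s a * (ln (pol (\<theta> + v) s a) - ln (pol \<theta> s a)))"
    by (simp add: KL_diff[OF psn] pos occ_def sum_distrib_left mult.assoc)
  finally have eq: "KL_term P ps (pol \<theta>) - KL_term P ps (pol (\<theta> + v))
      = (\<Sum>s\<in>UNIV. \<Sum>a\<in>UNIV. occ P ps s a * (ln (pol (\<theta> + v) s a) - ln (pol \<theta> s a)))" .
  have "(\<Sum>s\<in>UNIV. \<Sum>a\<in>UNIV. occ P ps s a * (score pol \<theta> s a \<bullet> v)) - G2 / 2 * (norm v)\<^sup>2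
      = (\<Sum>s\<in>UNIV. \<Sum>a\<in>UNIV. occ P ps s a * (score pol \<theta> s a \<bullet> v - G2 / 2 * (norm v)\<^sup>2))"
  proof -
    have h: "(\<Sum>s\<in>UNIV. \<Sum>a\<in>UNIV. occ P ps s a * (score pol \<theta> s a \<bullet> v - G2 / 2 * (norm v)\<^sup>2))
       = (\<Sum>s\<in>UNIV. \<Sum>a\<in>UNIV. occ P ps s a * (score pol \<theta> s a \<bullet> v))
         - (\<Sum>s\<in>UNIV. \<Sum>a\<in>UNIV. occ P ps s a) * (G2 / 2 * (norm v)\<^sup>2)"
      by (simp add: right_diff_distrib sum_subtractf sum_distrib_right)
    then show ?thesis using of(2) by simp
  qed
  also have "\<dots> \<le> (\<Sum>s\<in>UNIV. \<Sum>a\<in>UNIV. occ P ps s a * (ln (pol (\<theta> + v) s a) - ln (pol \<theta> s a)))"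
  proof (intro sum_mono mult_left_mono)
    fix s a
    show "score pol \<theta> s a \<bullet> v - G2 / 2 * (norm v)\<^sup>2 \<le> ln (pol (\<theta> + v) s a) - ln (pol \<theta> s a)"
      using descent[OF pos diff lip, of \<theta> s a v] by linarith
    show "0 \<le> occ P ps s a" using of(1) by blast
  qed
  finally show ?thesis unfolding eq .
qed

lemma ce_zero:
  fixes f g :: "'w \<Rightarrow> real"
  assumes sfs: "sigma_finite_subalgebra M G" and fG: "f \<in> borel_measurable G"
    and fb: "\<forall>x. \<bar>f x\<bar> \<le> B" and gi: "integrable M g"
  shows "integrable M (\<lambda>x. f x * (g x - real_cond_exp M G g x))"
    "(\<integral>x. f x * (g x - real_cond_exp M G g x) \<partial>M) = 0"
proof -
  have sub: "subalgebra M G" using sfs by (simp add: sigma_finite_subalgebra_def)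
  have fM: "f \<in> borel_measurable M" by (rule measurable_from_subalg[OF sub fG])
  have gM: "g \<in> borel_measurable M" using gi by simp
  have B0: "0 \<le> B" using fb by (meson abs_ge_zero order_trans)
  have i1: "integrable M (\<lambda>x. f x * g x)"
  proof (rule Bochner_Integration.integrable_bound[where f="\<lambda>x. B * g x"])
    show "integrable M (\<lambda>x. B * g x)" using gi by simp
    show "(\<lambda>x. f x * g x) \<in> borel_measurable M" using fM gM by simp
    show "AE x in M. norm (f x * g x) \<le> norm (B * g x)"
      using fb B0 by (auto simp: abs_mult intro!: mult_right_mono)
  qed
  note ce = sigma_finite_subalgebra.real_cond_exp_intg[OF sfs i1 fG gM]
  show "integrable M (\<lambda>x. f x * (g x - real_cond_exp M G g x))"
    using i1 ce(1) by (simp add: right_diff_distrib)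
  show "(\<integral>x. f x * (g x - real_cond_exp M G g x) \<partial>M) = 0"
    using i1 ce by (simp add: right_diff_distrib)
qed

lemma int_le_nn:
  fixes f R :: "'w \<Rightarrow> real"
  assumes fi: "integrable M f" and le: "\<forall>x\<in>space M. f x \<le> R x" and R0: "\<forall>x. 0 \<le> R x"
  shows "ereal (\<integral>x. f x \<partial>M) \<le> enn2ereal (\<integral>\<^sup>+x. ennreal (R x) \<partial>M)"
proof -
  have mi: "integrable M (\<lambda>x. max 0 (f x))" using fi by (intro integrable_max) auto
  have "(\<integral>x. f x \<partial>M) \<le> (\<integral>x. max 0 (f x) \<partial>M)" by (rule integral_mono[OF fi mi]) simp
  moreover have "ennreal (\<integral>x. max 0 (f x) \<partial>M) = (\<integral>\<^sup>+x. ennreal (max 0 (f x)) \<partial>M)"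
    by (rule nn_integral_eq_integral[OF mi, symmetric]) simp
  moreover have "(\<integral>\<^sup>+x. ennreal (max 0 (f x)) \<partial>M) \<le> (\<integral>\<^sup>+x. ennreal (R x) \<partial>M)"
    by (rule nn_integral_mono) (use le R0 in \<open>auto intro!: ennreal_leI\<close>)
  moreover have "0 \<le> (\<integral>x. max 0 (f x) \<partial>M)" by simp
  ultimately show ?thesis
    by (metis enn2ereal_ennreal ereal_less_eq(3) less_eq_ennreal.rep_eq order_trans)
qed

theorem lemma1:
  fixes P :: "'s::finite \<Rightarrow> 'a::finite \<Rightarrow> 's \<Rightarrow> real"
    and r c :: "'s \<Rightarrow> 'a \<Rightarrow> real"
    and pol :: "real^'d \<Rightarrow> 's \<Rightarrow> 'a \<Rightarrow> real"
    and pistar :: "'s \<Rightarrow> 'a \<Rightarrow> real"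
    and \<delta> \<mu> G1 G2 eps_bias \<alpha> :: real
    and K :: nat
    and M :: "'w measure" and F :: "nat \<Rightarrow> 'w measure"
    and theta omega :: "nat \<Rightarrow> 'w \<Rightarrow> real^'d"
    and lam :: "nat \<Rightarrow> 'w \<Rightarrow> real"
    and th0 :: "real^'d"
  assumes kernel: "is_kernel P"
    and erg: "ergodic P"
    and r_range: "\<forall>s a. 0 \<le> r s a \<and> r s a \<le> 1"
    and c_range: "\<forall>s a. -1 \<le> c s a \<and> c s a \<le> 1"
    and pi_policy: "\<forall>\<theta>. is_policy (pol \<theta>)"
    and pi_pos: "\<forall>\<theta> s a. 0 < pol \<theta> s a"
    and pi_diff: "\<forall>\<theta> s a. (\<lambda>t. pol t s a) differentiable (at \<theta>)"
    and slater: "0 < \<delta>" "\<delta> < 1" "\<exists>\<theta>b. \<delta> \<le> Jv P (pol \<theta>b) c"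
    and pistar_opt: "is_policy pistar" "0 \<le> Jv P pistar c"
      "\<forall>q. is_policy q \<and> 0 \<le> Jv P q c \<longrightarrow> Jv P q r \<le> Jv P pistar r"
    and score_bound: "\<forall>\<theta> s a. norm (score pol \<theta> s a) \<le> G1"
    and score_lip: "\<forall>\<theta>1 \<theta>2 s a. norm (score pol \<theta>1 s a - score pol \<theta>2 s a) \<le> G2 * norm (\<theta>1 - \<theta>2)"
    and fisher_nondeg: "0 < \<mu>" "\<forall>\<theta> x. \<mu> * (x \<bullet> x) \<le> x \<bullet> (fisher P pol \<theta> *v x)"
    and compat: "\<forall>\<theta> l. 0 \<le> l \<and> l \<le> 2 / \<delta> \<longrightarrow>
       (\<Sum>s\<in>UNIV. \<Sum>a\<in>UNIV. occ P pistar s a *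
          (score pol \<theta> s a \<bullet> natgrad P r c pol \<theta> l
             - Adv P (pol \<theta>) r s a - l * Adv P (pol \<theta>) c s a)\<^sup>2) \<le> eps_bias"
    and prob: "prob_space M"
    and filt: "\<forall>k. subalgebra M (F k)" "\<forall>k. sets (F k) \<subseteq> sets (F (Suc k))"
    and adapted: "\<forall>k\<le>K. theta k \<in> borel_measurable (F k) \<and> lam k \<in> borel_measurable (F k)"
    and lam_range: "\<forall>k\<le>K. \<forall>x\<in>space M. 0 \<le> lam k x \<and> lam k x \<le> 2 / \<delta>"
    and theta0: "\<forall>x\<in>space M. theta 0 x = th0"
    and alpha_pos: "0 < \<alpha>"
    and update: "\<forall>k<K. \<forall>x\<in>space M. theta (Suc k) x = theta k x + \<alpha> *\<^sub>R omega k x"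
    and omega_rv: "\<forall>k<K. omega k \<in> borel_measurable M \<and> (\<forall>i. integrable M (\<lambda>x. omega k x $ i))"
    and K_pos: "0 < K"
  shows "ereal ((1 / real K) *
            (\<integral>x. (\<Sum>k<K. Lagr P r c pistar (lam k x) - Lagr P r c (pol (theta k x)) (lam k x)) \<partial>M))
    \<le> ereal (sqrt eps_bias)
      + ereal (G1 / real K) *
          (\<Sum>k<K. enn2ereal (\<integral>\<^sup>+x. ennreal (norm
              ((\<chi> i. real_cond_exp M (F k) (\<lambda>y. omega k y $ i) x)
                 - natgrad P r c pol (theta k x) (lam k x))) \<partial>M))
      + ereal (\<alpha> * G2 / (2 * real K)) *
          (\<Sum>k<K. enn2ereal (\<integral>\<^sup>+x. ennreal ((norm (omega k x))\<^sup>2) \<partial>M))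
      + ereal (1 / (\<alpha> * real K)) * ereal (KL_term P pistar (pol th0))"
proof -
  let ?K = "real K"
  have Kpos: "0 < ?K" using K_pos by simp
  have G1nn: "0 \<le> G1"
  proof -
    have "norm (score pol th0 undefined undefined) \<le> G1" using score_bound by blast
    then show ?thesis using norm_ge_zero[of "score pol th0 undefined undefined"] by linarith
  qed
  have G2nn: "0 \<le> G2"
  proof -
    let ?u = "score pol (axis (undefined::'d) 1) undefined undefined - score pol 0 undefined undefined"
    have "norm ?u \<le> G2 * norm (axis (undefined::'d) (1::real) - 0)" using score_lip by blast
    then have "norm ?u \<le> G2" by simp
    then show ?thesis using norm_ge_zero[of ?u] by linarith
  qed
  note of = occ_facts[OF kernel erg pistar_opt(1)]
  have KLnn: "0 \<le> KL_term P pistar (pol \<theta>)" for \<theta>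
    unfolding KL_term_def
  proof (intro sum_nonneg mult_nonneg_nonneg)
    fix s
    show "0 \<le> statdist P pistar s" using of(3) by blast
    show "0 \<le> KL (pistar s) (pol \<theta> s)"
      by (rule KL_nonneg) (use pistar_opt(1) pi_policy pi_pos in \<open>auto simp: is_policy_def\<close>)
  qed
  have finM: "finite_measure M" using prob by (simp add: prob_space_def)
  have sfs: "sigma_finite_subalgebra M (F k)" for k
    by (rule finite_measure_subalgebra_is_sigma_finite)
       (simp add: finite_measure_subalgebra_def finite_measure_subalgebra_axioms_def finM filt(1))
  have thF: "theta k \<in> borel_measurable (F k)" if "k \<le> K" for k using adapted that by blast
  have lamF: "lam k \<in> borel_measurable (F k)" if "k \<le> K" for k using adapted that by blast
  have thM: "theta k \<in> borel_measurable M" if "k \<le> K" for k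
    using measurable_from_subalg[OF filt(1)[rule_format] thF[OF that]] .
  have lamM: "lam k \<in> borel_measurable M" if "k \<le> K" for k
    using measurable_from_subalg[OF filt(1)[rule_format] lamF[OF that]] .

  define \<nu> where "\<nu> = occ P pistar"
  define sc where "sc k x s a = score pol (theta k x) s a" for k x s a
  define e where "e k x = (\<chi> i. real_cond_exp M (F k) (\<lambda>y. omega k y $ i) x)" for k x
  define T where "T k x = (\<Sum>s\<in>UNIV. \<Sum>a\<in>UNIV. \<nu> s a * (sc k x s a \<bullet> e k x))" for k x
  define Z where "Z k x = (\<Sum>s\<in>UNIV. \<Sum>a\<in>UNIV. \<nu> s a * (sc k x s a \<bullet> (omega k x - e k x)))" for k x
  define Ls where "Ls k x = Lagr P r c pistar (lam k x)" for k x
  define Lk where "Lk k x = Lagr P r c (pol (theta k x)) (lam k x)" for k x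
  define q where "q k x = max 0 (Ls k x - Lk k x - sqrt eps_bias - T k x)" for k x
  define nk where "nk k x = norm (e k x - natgrad P r c pol (theta k x) (lam k x))" for k x
  define KLk where "KLk k x = KL_term P pistar (pol (theta k x))" for k x
  define KL0 where "KL0 = KL_term P pistar (pol th0)"
  define W where "W k x = (norm (omega k x))\<^sup>2" for k x
  define R where "R x = sqrt eps_bias + KL0 / (\<alpha> * ?K) + (\<Sum>k<K. q k x / ?K) + (\<alpha> * G2 / (2 * ?K)) * (\<Sum>k<K. W k x)" for x

  have KL0nn: "0 \<le> KL0" unfolding KL0_def by (rule KLnn)
  have epsnn: "0 \<le> eps_bias"
  proof -
    have "0 \<le> 2 / \<delta>" using slater(1) by simp
    then have c0: "(\<Sum>s\<in>UNIV. \<Sum>a\<in>UNIV. occ P pistar s a *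
          (score pol th0 s a \<bullet> natgrad P r c pol th0 0
             - Adv P (pol th0) r s a - 0 * Adv P (pol th0) c s a)\<^sup>2) \<le> eps_bias"
      using compat by blast
    have "0 \<le> (\<Sum>s\<in>UNIV. \<Sum>a\<in>UNIV. occ P pistar s a *
          (score pol th0 s a \<bullet> natgrad P r c pol th0 0
             - Adv P (pol th0) r s a - 0 * Adv P (pol th0) c s a)\<^sup>2)"
      using of(1) by (intro sum_nonneg mult_nonneg_nonneg) auto
    then show ?thesis using c0 by linarith
  qed
  have R0: "0 \<le> R x" for x
    unfolding R_def using KL0nn Kpos alpha_pos G2nn epsnn
    by (intro add_nonneg_nonneg mult_nonneg_nonneg sum_nonneg divide_nonneg_nonneg)
       (auto simp: q_def W_def)

  have step: "Ls k x - Lk k x + Z k x \<le> sqrt eps_bias + q k x + (KLk k x - KLk (Suc k) x) / \<alpha> + \<alpha> * G2 / 2 * W k x"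
    if x: "x \<in> space M" and k: "k < K" for x k
  proof -
    have lr: "0 \<le> lam k x \<and> lam k x \<le> 2 / \<delta>" using lam_range x k by simp
    have q1: "Ls k x - Lk k x \<le> sqrt eps_bias + T k x + q k x" unfolding q_def by linarith
    have dsc: "(\<Sum>s\<in>UNIV. \<Sum>a\<in>UNIV. \<nu> s a * (sc k x s a \<bullet> (\<alpha> *\<^sub>R omega k x))) - G2 / 2 * (norm (\<alpha> *\<^sub>R omega k x))\<^sup>2
         \<le> KLk k x - KLk (Suc k) x"
      unfolding \<nu>_def sc_def KLk_def using update x k
      using KL_step[OF kernel erg pistar_opt(1) pi_pos pi_diff score_lip, of "theta k x" "\<alpha> *\<^sub>R omega k x"]
      by simp
    have lin: "(\<Sum>s\<in>UNIV. \<Sum>a\<in>UNIV. \<nu> s a * (sc k x s a \<bullet> (\<alpha> *\<^sub>R omega k x))) = \<alpha> * (T k x + Z k x)"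
    proof -
      have "sc k x s a \<bullet> (\<alpha> *\<^sub>R omega k x) = \<alpha> * (sc k x s a \<bullet> e k x + sc k x s a \<bullet> (omega k x - e k x))" for s a
        by (simp add: inner_diff_right)
      then show ?thesis
        by (simp add: T_def Z_def sum_distrib_left sum.distrib[symmetric] distrib_left mult.left_commute)
    qed
    have nw: "(norm (\<alpha> *\<^sub>R omega k x))\<^sup>2 = \<alpha>\<^sup>2 * W k x" by (simp add: W_def power_mult_distrib)
    have "\<alpha> * (T k x + Z k x) - G2 / 2 * (\<alpha>\<^sup>2 * W k x) \<le> KLk k x - KLk (Suc k) x"
      using dsc unfolding lin nw .
    then have "\<alpha> * (T k x + Z k x - \<alpha> * G2 / 2 * W k x) \<le> KLk k x - KLk (Suc k) x"
      by (simp add: power2_eq_square algebra_simps)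
    then have "T k x + Z k x - \<alpha> * G2 / 2 * W k x \<le> (KLk k x - KLk (Suc k) x) / \<alpha>"
      using alpha_pos by (simp add: pos_le_divide_eq mult.commute)
    then show ?thesis using q1 by linarith
  qed
  have pt: "(1 / ?K) * ((\<Sum>k<K. Ls k x - Lk k x) + (\<Sum>k<K. Z k x)) \<le> R x" if x: "x \<in> space M" for x
  proof -
    have "(\<Sum>k<K. Ls k x - Lk k x) + (\<Sum>k<K. Z k x) = (\<Sum>k<K. Ls k x - Lk k x + Z k x)"
      by (simp add: sum.distrib)
    also have "\<dots> \<le> (\<Sum>k<K. sqrt eps_bias + q k x + (KLk k x - KLk (Suc k) x) / \<alpha> + \<alpha> * G2 / 2 * W k x)"
      by (rule sum_mono) (use step x in auto)
    also have "\<dots> = ?K * sqrt eps_bias + (\<Sum>k<K. q k x) + (\<Sum>k<K. KLk k x - KLk (Suc k) x) / \<alpha> + \<alpha> * G2 / 2 * (\<Sum>k<K. W k x)"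
      by (simp add: sum.distrib sum_divide_distrib sum_distrib_left)
    also have "(\<Sum>k<K. KLk k x - KLk (Suc k) x) = KLk 0 x - KLk K x"
      by (rule sum_lessThan_telescope')
    also have "KLk 0 x = KL0" using theta0 x by (simp add: KLk_def KL0_def)
    finally have "(\<Sum>k<K. Ls k x - Lk k x) + (\<Sum>k<K. Z k x)
       \<le> ?K * sqrt eps_bias + (\<Sum>k<K. q k x) + (KL0 - KLk K x) / \<alpha> + \<alpha> * G2 / 2 * (\<Sum>k<K. W k x)" .
    moreover have "(KL0 - KLk K x) / \<alpha> \<le> KL0 / \<alpha>"
      using KLnn[of "theta K x"] alpha_pos by (simp add: KLk_def divide_right_mono)
    ultimately have "(\<Sum>k<K. Ls k x - Lk k x) + (\<Sum>k<K. Z k x)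
       \<le> ?K * sqrt eps_bias + (\<Sum>k<K. q k x) + KL0 / \<alpha> + \<alpha> * G2 / 2 * (\<Sum>k<K. W k x)" by linarith
    then have "(1 / ?K) * ((\<Sum>k<K. Ls k x - Lk k x) + (\<Sum>k<K. Z k x))
       \<le> (1 / ?K) * (?K * sqrt eps_bias + (\<Sum>k<K. q k x) + KL0 / \<alpha> + \<alpha> * G2 / 2 * (\<Sum>k<K. W k x))"
      using Kpos by (intro mult_left_mono) auto
    also have "\<dots> = R x" using Kpos alpha_pos
      by (simp add: R_def sum_divide_distrib[symmetric] field_simps)
    finally show ?thesis .
  qed
  have LsM: "Ls k \<in> borel_measurable M" if "k \<le> K" for k
    unfolding Ls_def[abs_def] Lagr_def using lamM[OF that] by simp
  have LkM: "Lk k \<in> borel_measurable M" if "k \<le> K" for k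
    unfolding Lk_def[abs_def] Lagr_def
    using lamM[OF that] Jv_meas[OF kernel erg pi_policy pi_diff thM[OF that]] by simp
  have scM: "(\<lambda>x. sc k x s a $ i) \<in> borel_measurable M" if "k \<le> K" for k s a i
    unfolding sc_def by (rule score_meas[OF score_lip thM[OF that]])
  have TM: "T k \<in> borel_measurable M" if "k \<le> K" for k
  proof -
    have "T k = (\<lambda>x. \<Sum>s\<in>UNIV. \<Sum>a\<in>UNIV. \<nu> s a * (\<Sum>i\<in>UNIV. sc k x s a $ i * real_cond_exp M (F k) (\<lambda>y. omega k y $ i) x))"
      by (rule ext) (simp add: T_def e_def inner_vec_def)
    then show ?thesis using scM[OF that] by simp
  qed
  have qM: "q k \<in> borel_measurable M" if "k \<le> K" for k
    unfolding q_def[abs_def] using LsM[OF that] LkM[OF that] TM[OF that] by simp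
  have WM: "W k \<in> borel_measurable M" if "k < K" for k
  proof -
    have om[measurable]: "omega k \<in> borel_measurable M" using omega_rv that by blast
    show ?thesis unfolding W_def[abs_def] by measurable
  qed
  have qle: "q k x \<le> G1 * nk k x" if x: "x \<in> space M" and k: "k < K" for x k
  proof -
    have lr: "0 \<le> lam k x \<and> lam k x \<le> 2 / \<delta>" using lam_range x k by simp
    have pb: "Ls k x - Lk k x - sqrt eps_bias \<le> (\<Sum>s\<in>UNIV. \<Sum>a\<in>UNIV. \<nu> s a * (sc k x s a \<bullet> natgrad P r c pol (theta k x) (lam k x)))"
      unfolding Ls_def Lk_def \<nu>_def sc_def
      by (rule pdl_bound[OF kernel erg pi_policy[rule_format] pistar_opt(1)]) (use compat lr in blast)
    have "(\<Sum>s\<in>UNIV. \<Sum>a\<in>UNIV. \<nu> s a * (sc k x s a \<bullet> natgrad P r c pol (theta k x) (lam k x))) - T k x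
        = (\<Sum>s\<in>UNIV. \<Sum>a\<in>UNIV. \<nu> s a * (sc k x s a \<bullet> (natgrad P r c pol (theta k x) (lam k x) - e k x)))"
      by (simp add: T_def inner_diff_right right_diff_distrib sum_subtractf)
    also have "\<dots> \<le> (\<Sum>s\<in>UNIV. \<Sum>a\<in>UNIV. \<nu> s a * (G1 * nk k x))"
    proof (intro sum_mono mult_left_mono)
      fix s a
      show "0 \<le> \<nu> s a" using of(1) by (simp add: \<nu>_def)
      have "sc k x s a \<bullet> (natgrad P r c pol (theta k x) (lam k x) - e k x)
          \<le> norm (sc k x s a) * norm (natgrad P r c pol (theta k x) (lam k x) - e k x)"
        by (rule norm_cauchy_schwarz)
      also have "\<dots> \<le> G1 * norm (natgrad P r c pol (theta k x) (lam k x) - e k x)"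
        by (rule mult_right_mono) (use score_bound in \<open>auto simp: sc_def\<close>)
      also have "\<dots> = G1 * nk k x" by (simp add: nk_def norm_minus_commute)
      finally show "sc k x s a \<bullet> (natgrad P r c pol (theta k x) (lam k x) - e k x) \<le> G1 * nk k x" .
    qed
    also have "\<dots> = G1 * nk k x" using of(2) by (simp add: \<nu>_def sum_distrib_right[symmetric])
    finally have "Ls k x - Lk k x - sqrt eps_bias - T k x \<le> G1 * nk k x" using pb by linarith
    moreover have "0 \<le> G1 * nk k x" using G1nn by (simp add: nk_def)
    ultimately show ?thesis unfolding q_def by simp
  qed
  have Zi: "integrable M (Z k) \<and> (\<integral>x. Z k x \<partial>M) = 0" if k: "k < K" for k
  proof -
    have thFk: "theta k \<in> borel_measurable (F k)" using thF k by simp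
    define fc where "fc s a i x = score pol (theta k x) s a $ i * (omega k x $ i - real_cond_exp M (F k) (\<lambda>y. omega k y $ i) x)" for s a i x
    have comp: "integrable M (fc s a i) \<and> (\<integral>x. fc s a i x \<partial>M) = 0" for s a i
    proof -
      have fb: "\<forall>x. \<bar>score pol (theta k x) s a $ i\<bar> \<le> G1"
      proof
        fix x show "\<bar>score pol (theta k x) s a $ i\<bar> \<le> G1"
          using component_le_norm_cart[of "score pol (theta k x) s a" i] score_bound by (meson order_trans)
      qed
      have gi: "integrable M (\<lambda>y. omega k y $ i)" using omega_rv k by blast
      show ?thesis unfolding fc_def[abs_def] using ce_zero[OF sfs score_meas[OF score_lip thFk] fb gi] by simp
    qed
    have Zeq: "Z k = (\<lambda>x. \<Sum>s\<in>UNIV. \<Sum>a\<in>UNIV. \<nu> s a * (\<Sum>i\<in>UNIV. fc s a i x))"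
      by (rule ext) (simp add: Z_def sc_def e_def inner_vec_def fc_def)
    have "integrable M (Z k)" unfolding Zeq using comp by simp
    moreover have "(\<integral>x. Z k x \<partial>M) = 0" unfolding Zeq using comp by (simp add: integral_sum)
    ultimately show ?thesis by simp
  qed
  define Ik where "Ik k = (\<integral>\<^sup>+x. ennreal (nk k x) \<partial>M)" for k
  define Jk where "Jk k = (\<integral>\<^sup>+x. ennreal (W k x) \<partial>M)" for k
  have main: "ereal ((1 / ?K) * (\<integral>x. (\<Sum>k<K. Ls k x - Lk k x) \<partial>M))
    \<le> ereal (sqrt eps_bias) + ereal (G1 / ?K) * (\<Sum>k<K. enn2ereal (Ik k))
      + ereal (\<alpha> * G2 / (2 * ?K)) * (\<Sum>k<K. enn2ereal (Jk k)) + ereal (1 / (\<alpha> * ?K)) * ereal KL0"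
  proof (cases "integrable M (\<lambda>x. \<Sum>k<K. Ls k x - Lk k x)")
    case False
    have "0 \<le> ereal (sqrt eps_bias) + ereal (G1 / ?K) * (\<Sum>k<K. enn2ereal (Ik k))
      + ereal (\<alpha> * G2 / (2 * ?K)) * (\<Sum>k<K. enn2ereal (Jk k)) + ereal (1 / (\<alpha> * ?K)) * ereal KL0"
      using epsnn G1nn G2nn alpha_pos Kpos KL0nn
      by (intro add_nonneg_nonneg mult_nonneg_nonneg sum_nonneg) auto
    then show ?thesis using False by (simp add: not_integrable_integral_eq zero_ereal_def)
  next
    case True
    let ?S = "\<lambda>x. \<Sum>k<K. Ls k x - Lk k x"
    define c0 where "c0 = sqrt eps_bias + KL0 / (\<alpha> * ?K)"
    define bW where "bW = \<alpha> * G2 / (2 * ?K)"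
    have c0nn: "0 \<le> c0" unfolding c0_def using epsnn KL0nn alpha_pos Kpos by simp
    have bWnn: "0 \<le> bW" unfolding bW_def using G2nn alpha_pos Kpos by simp
    have Zi1: "\<And>k. k \<in> {..<K} \<Longrightarrow> integrable M (Z k)" using Zi by simp
    have ZS: "integrable M (\<lambda>x. \<Sum>k<K. Z k x)" "(\<integral>x. (\<Sum>k<K. Z k x) \<partial>M) = 0"
  proof -
    show "integrable M (\<lambda>x. \<Sum>k<K. Z k x)"
      by (rule Bochner_Integration.integrable_sum) (use Zi in auto)
    have "(\<integral>x. (\<Sum>k<K. Z k x) \<partial>M) = (\<Sum>k<K. \<integral>x. Z k x \<partial>M)"
      by (rule Bochner_Integration.integral_sum) (use Zi in auto)
    also have "\<dots> = 0" using Zi by simp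
    finally show "(\<integral>x. (\<Sum>k<K. Z k x) \<partial>M) = 0" .
  qed
    define f where "f x = (1 / ?K) * (?S x + (\<Sum>k<K. Z k x))" for x
    have fi: "integrable M f" unfolding f_def using True ZS(1) by simp
    have fint: "(\<integral>x. f x \<partial>M) = (1 / ?K) * (\<integral>x. ?S x \<partial>M)"
      unfolding f_def using True ZS by simp
    have "ereal (\<integral>x. f x \<partial>M) \<le> enn2ereal (\<integral>\<^sup>+x. ennreal (R x) \<partial>M)"
      by (rule int_le_nn[OF fi]) (use pt R0 in \<open>auto simp: f_def\<close>)
    moreover have Req: "ennreal (R x) = ennreal c0 + (\<Sum>k<K. ennreal (q k x / ?K)) + ennreal bW * (\<Sum>k<K. ennreal (W k x))" for x
    proof -
      have qn: "0 \<le> q k x / ?K" for k using Kpos by (simp add: q_def)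
      have wn: "0 \<le> W k x" for k by (simp add: W_def)
      have "R x = c0 + (\<Sum>k<K. q k x / ?K) + bW * (\<Sum>k<K. W k x)" by (simp add: R_def c0_def bW_def)
      moreover have s1: "0 \<le> (\<Sum>k<K. q k x / ?K)" using qn by (simp add: sum_nonneg)
      moreover have s2: "0 \<le> (\<Sum>k<K. W k x)" using wn by (simp add: sum_nonneg)
      ultimately show ?thesis using qn wn c0nn bWnn
        by (simp add: ennreal_mult)
    qed
    have intR: "(\<integral>\<^sup>+x. ennreal (R x) \<partial>M) = ennreal c0 + (\<Sum>k<K. \<integral>\<^sup>+x. ennreal (q k x / ?K) \<partial>M) + ennreal bW * (\<Sum>k<K. Jk k)"
    proof -
      have qm: "(\<lambda>x. ennreal (q k x / ?K)) \<in> borel_measurable M" if "k < K" for k using qM[of k] that by simp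
      have wm: "(\<lambda>x. ennreal (W k x)) \<in> borel_measurable M" if "k < K" for k using WM[OF that] by simp
      have "(\<integral>\<^sup>+x. ennreal (R x) \<partial>M) = (\<integral>\<^sup>+x. ennreal c0 + (\<Sum>k<K. ennreal (q k x / ?K)) + ennreal bW * (\<Sum>k<K. ennreal (W k x)) \<partial>M)"
        unfolding Req ..
      also have "\<dots> = (\<integral>\<^sup>+x. ennreal c0 \<partial>M) + (\<integral>\<^sup>+x. (\<Sum>k<K. ennreal (q k x / ?K)) \<partial>M) + (\<integral>\<^sup>+x. ennreal bW * (\<Sum>k<K. ennreal (W k x)) \<partial>M)"
        using qm wm by (simp add: nn_integral_add borel_measurable_sum)
      also have "\<dots> = ennreal c0 + (\<Sum>k<K. \<integral>\<^sup>+x. ennreal (q k x / ?K) \<partial>M) + ennreal bW * (\<Sum>k<K. Jk k)"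
      proof -
        have A: "(\<integral>\<^sup>+x. (\<Sum>k<K. ennreal (q k x / ?K)) \<partial>M) = (\<Sum>k<K. \<integral>\<^sup>+x. ennreal (q k x / ?K) \<partial>M)"
          by (rule nn_integral_sum) (use qm in auto)
        have B: "(\<integral>\<^sup>+x. (\<Sum>k<K. ennreal (W k x)) \<partial>M) = (\<Sum>k<K. Jk k)"
          unfolding Jk_def by (rule nn_integral_sum) (use wm in auto)
        have C: "(\<integral>\<^sup>+x. ennreal bW * (\<Sum>k<K. ennreal (W k x)) \<partial>M) = ennreal bW * (\<integral>\<^sup>+x. (\<Sum>k<K. ennreal (W k x)) \<partial>M)"
          by (rule nn_integral_cmult) (use wm in auto)
        have D: "(\<integral>\<^sup>+x. ennreal c0 \<partial>M) = ennreal c0"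
          using prob by (simp add: prob_space.emeasure_space_1)
        show ?thesis unfolding A B C D ..
      qed
      finally show ?thesis .
    qed
    have qI: "(\<integral>\<^sup>+x. ennreal (q k x / ?K) \<partial>M) \<le> ennreal (G1 / ?K) * Ik k" if k: "k < K" for k
    proof (cases "G1 = 0")
      case True
      have "\<forall>x\<in>space M. q k x = 0" using qle k True by (auto simp: q_def)
      then have "(\<integral>\<^sup>+x. ennreal (q k x / ?K) \<partial>M) = (\<integral>\<^sup>+x. 0 \<partial>M)"
        by (intro nn_integral_cong) simp
      then have "(\<integral>\<^sup>+x. ennreal (q k x / ?K) \<partial>M) = 0" by simp
      then show ?thesis by simp
    next
      case False
      then have G1p: "0 < G1" using G1nn by simp
      have "(\<integral>\<^sup>+x. ennreal (q k x / ?K) \<partial>M) = (\<integral>\<^sup>+x. ennreal (G1 / ?K) * ennreal (q k x / G1) \<partial>M)"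
        using G1p Kpos by (intro nn_integral_cong) (simp add: ennreal_mult[symmetric] q_def)
      also have "\<dots> = ennreal (G1 / ?K) * (\<integral>\<^sup>+x. ennreal (q k x / G1) \<partial>M)"
        using qM[of k] k by (intro nn_integral_cmult) simp
      also have "\<dots> \<le> ennreal (G1 / ?K) * Ik k"
        unfolding Ik_def
      proof (intro mult_left_mono nn_integral_mono ennreal_leI)
        fix x assume "x \<in> space M"
        then show "q k x / G1 \<le> nk k x" using qle[of x k] k G1p by (simp add: divide_le_eq mult.commute)
      qed simp
      finally show ?thesis .
    qed
    have "enn2ereal (\<integral>\<^sup>+x. ennreal (R x) \<partial>M) \<le> enn2ereal (ennreal c0 + ennreal (G1 / ?K) * (\<Sum>k<K. Ik k) + ennreal bW * (\<Sum>k<K. Jk k))"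
    proof -
      have "(\<integral>\<^sup>+x. ennreal (R x) \<partial>M) \<le> ennreal c0 + ennreal (G1 / ?K) * (\<Sum>k<K. Ik k) + ennreal bW * (\<Sum>k<K. Jk k)"
        unfolding intR sum_distrib_left using qI by (intro add_mono sum_mono order_refl) auto
      then show ?thesis by (simp add: less_eq_ennreal.rep_eq)
    qed
    also have "\<dots> = ereal c0 + ereal (G1 / ?K) * (\<Sum>k<K. enn2ereal (Ik k)) + ereal bW * (\<Sum>k<K. enn2ereal (Jk k))"
      using c0nn bWnn G1nn Kpos by (simp add: plus_ennreal.rep_eq times_ennreal.rep_eq)
    finally have fin: "ereal (\<integral>x. f x \<partial>M) \<le> ereal c0 + ereal (G1 / ?K) * (\<Sum>k<K. enn2ereal (Ik k)) + ereal bW * (\<Sum>k<K. enn2ereal (Jk k))" .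
    have e1: "ereal c0 = ereal (sqrt eps_bias) + ereal (1 / (\<alpha> * ?K)) * ereal KL0"
      by (simp add: c0_def)
    show ?thesis using fin unfolding fint bW_def e1 by (simp only: ac_simps)
  qed
  show ?thesis using main unfolding Ls_def Lk_def Ik_def Jk_def nk_def e_def W_def KL0_def .
qed

end
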